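(* Let $\mathcal Z$ be a measurable space with probability measure $\eta$, fix $\beta>0$ and $u\in\mathbb S^{d-1}$. For measurable $\Psi:\mathcal Z\to O(d)$ let $h_\Psi((x,z),(y,w)):=\beta^{-1}\exp(\beta\langle x,\Psi(z)\Psi(w)^{\mathsf T}y\rangle)$ and $\mathcal E_\Psi:=\mathcal E^{\rm pr}_{h_\Psi}$. (i) With $x^\Psi(z):=\Psi(z)u$ and $\mu^\ast:=\Gamma_\eta[x^\Psi]$, one has $\mathcal E_\Psi[\mu]\le\mathcal E_\Psi[\mu^\ast]=e^\beta/(2\beta)$ for every $\mu\in\mathcal P_\eta$, so $\mu^\ast$ is a global maximizer on $\mathcal P_\eta$, and $(\pi_x)_{\#}\mu^\ast=(x^\Psi)_{\#}\eta=(\Psi(\cdot)u)_{\#}\eta$. (ii) For every measurable $G:\mathcal Z\to\mathbb S^{d-1}$ there is a measurable $\Psi_G:\mathcal Z\to O(d)$ with $\Psi_G(z)u=G(z)$ for all $z$; consequently $\mu^G:=\Gamma_\eta[G]$ is a global maximizer of $\mathcal E_{\Psi_G}$ on $\mathcal P_\eta$ and its content marginal equals $G_{\#}\eta$. (iii) If $\mathcal Z$ is a standard Borel space and $\eta$ is nonatomic, then for every Borel probability measure $\nu$ on $\mathbb S^{d-1}$ there exist measurable $G:\mathcal Z\to\mathbb S^{d-1}$ and $\Psi_G:\mathcal Z\to O(d)$ as in (ii) such that $(\pi_x)_{\#}\mu^G=G_{\#}\eta=\nu$.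
   Context: $X_{\mathcal Z}:=\mathbb S^{d-1}\times\mathcal Z$. $\mathcal P_\eta:=\{\mu\in\mathcal P(X_{\mathcal Z}):(\pi_{\mathcal Z})_{\#}\mu=\eta\}$; each such $\mu$ is written $\mu(dx,dz)=\mu^z(dx)\eta(dz)$. The prompt energy of a kernel $h$ is $\mathcal E_h^{\rm pr}[\mu]:=\frac12\iint_{\mathcal Z\times\mathcal Z}\iint_{\mathbb S^{d-1}\times\mathbb S^{d-1}}h((x,z),(y,w))\,\mu^z(dx)\mu^w(dy)\eta(dz)\eta(dw)$. For measurable $G:\mathcal Z\to\mathbb S^{d-1}$, $\Gamma_\eta[G]:=(z\mapsto(G(z),z))_{\#}\eta$. $\pi_x,\pi_{\mathcal Z}$ are the coordinate projections; $O(d)$ is the orthogonal group. *)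

theory Defs
  imports "HOL-Probability.Probability"
begin

definition borel_of :: "'a topology \<Rightarrow> 'a measure" where
  "borel_of X = sigma (topspace X) {U. openin X U}"

definition Polish_space :: "'a topology \<Rightarrow> bool" where
  "Polish_space X \<longleftrightarrow> completely_metrizable_space X \<and> separable_space X"

definition standard_borel :: "'a measure \<Rightarrow> bool" where
  "standard_borel M \<longleftrightarrow> (\<exists>X. Polish_space X \<and> topspace X = space M \<and> sets (borel_of X) = sets M)"

definition is_atom :: "'a measure \<Rightarrow> 'a set \<Rightarrow> bool" where
  "is_atom M A \<longleftrightarrow> A \<in> sets M \<and> emeasure M A > 0 \<and>
     (\<forall>B\<in>sets M. B \<subseteq> A \<longrightarrow> emeasure M B = 0 \<or> emeasure M B = emeasure M A)"

definition nonatomic :: "'a measure \<Rightarrow> bool" where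
  "nonatomic M \<longleftrightarrow> (\<nexists>A. is_atom M A)"

definition Sph :: "(real^'n) measure" where
  "Sph = restrict_space borel (sphere 0 1)"

definition XZ :: "'z measure \<Rightarrow> ((real^'n) \<times> 'z) measure" where
  "XZ eta = Sph \<Otimes>\<^sub>M eta"

definition Peta :: "'z measure \<Rightarrow> ((real^'n) \<times> 'z) measure set" where
  "Peta eta = {\<mu>. prob_space \<mu> \<and> sets \<mu> = sets (XZ eta) \<and> distr \<mu> eta snd = eta}"

text \<open>Prompt energy: 1/2 \<integral>\<integral> h d\<mu> d\<mu>; with \<mu>(dx,dz) = \<mu>^z(dx) \<eta>(dz) this is the
  iterated integral against \<mu>^z(dx)\<mu>^w(dy)\<eta>(dz)\<eta>(dw).\<close>
definition prompt_energy ::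
  "(((real^'n) \<times> 'z) \<Rightarrow> ((real^'n) \<times> 'z) \<Rightarrow> real) \<Rightarrow> ((real^'n) \<times> 'z) measure \<Rightarrow> real" where
  "prompt_energy h \<mu> = (1/2) * (\<integral>p. (\<integral>q. h p q \<partial>\<mu>) \<partial>\<mu>)"

definition Gamma :: "'z measure \<Rightarrow> ('z \<Rightarrow> real^'n) \<Rightarrow> ((real^'n) \<times> 'z) measure" where
  "Gamma eta G = distr eta (XZ eta) (\<lambda>z. (G z, z))"

definition hPsi :: "real \<Rightarrow> ('z \<Rightarrow> real^'n^'n) \<Rightarrow> ((real^'n) \<times> 'z) \<Rightarrow> ((real^'n) \<times> 'z) \<Rightarrow> real" where
  "hPsi \<beta> \<Psi> p q = (1/\<beta>) * exp (\<beta> * (fst p \<bullet> ((\<Psi> (snd p) ** transpose (\<Psi> (snd q))) *v fst q)))"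

definition measurable_O :: "'z measure \<Rightarrow> ('z \<Rightarrow> real^'n^'n) \<Rightarrow> bool" where
  "measurable_O eta \<Psi> \<longleftrightarrow> \<Psi> \<in> borel_measurable eta \<and> (\<forall>z\<in>space eta. orthogonal_matrix (\<Psi> z))"

end

theory Submission
  imports Defs
begin

lemma space_Sph: "space (Sph :: (real^'n) measure) = sphere 0 1"
  by (simp add: Sph_def space_restrict_space)

lemma space_XZ: "space (XZ eta :: ((real^'n) \<times> 'z) measure) = sphere 0 1 \<times> space eta"
  by (simp add: XZ_def space_pair_measure space_Sph)

lemma orth_norm:
  fixes A :: "real^'n^'n"
  assumes "orthogonal_matrix A"
  shows "norm (A *v x) = norm x"
proof -
  have "orthogonal_transformation (\<lambda>x. A *v x)"
    using assms orthogonal_transformation_matrix[of "\<lambda>x. A *v x"] matrix_vector_mul_linear[of A]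
    by simp
  then show ?thesis by (simp add: orthogonal_transformation)
qed

lemma orth_transpose_mult:
  fixes A :: "real^'n^'n"
  assumes "orthogonal_matrix A"
  shows "transpose A *v (A *v x) = x"
  using assms by (simp add: orthogonal_matrix_def matrix_vector_mul_assoc)

lemma cont_mv: "continuous_on UNIV (\<lambda>p. fst p *v (snd p :: real^'n) :: real^'m)"
  unfolding matrix_vector_mult_def
  by (intro continuous_intros)

lemma meas_mv:
  fixes A :: "'a \<Rightarrow> real^'n^'m" and x :: "'a \<Rightarrow> real^'n"
  assumes "A \<in> borel_measurable M" "x \<in> borel_measurable M"
  shows "(\<lambda>z. A z *v x z) \<in> borel_measurable M"
  using borel_measurable_continuous_Pair[OF assms, of "(*v)"] cont_mv by blast

lemma meas_transpose:
  fixes A :: "'a \<Rightarrow> real^'n^'m"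
  assumes "A \<in> borel_measurable M"
  shows "(\<lambda>z. transpose (A z)) \<in> borel_measurable M"
proof -
  have "continuous_on UNIV (\<lambda>B::real^'n^'m. transpose B)"
    unfolding transpose_def by (intro continuous_intros)
  from borel_measurable_continuous_on[OF this assms] show ?thesis .
qed

lemma orth_norm2:
  fixes A :: "real^'n^'n"
  assumes "orthogonal_matrix A"
  shows "norm (x v* A) = norm x"
  by (metis assms orth_norm orthogonal_matrix_transpose vector_transpose_matrix transpose_transpose)

lemma hPsi_alt:
  "hPsi \<beta> \<Psi> p q = (1/\<beta>) * exp (\<beta> * ((fst p v* \<Psi> (snd p)) \<bullet> (fst q v* \<Psi> (snd q))))"
proof -
  have "fst p \<bullet> ((\<Psi> (snd p) ** transpose (\<Psi> (snd q))) *v fst q)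
     = fst p \<bullet> (\<Psi> (snd p) *v (transpose (\<Psi> (snd q)) *v fst q))"
    by (simp only: matrix_vector_mul_assoc)
  also have "\<dots> = (fst p v* \<Psi> (snd p)) \<bullet> (transpose (\<Psi> (snd q)) *v fst q)"
    by (simp only: dot_lmul_matrix)
  also have "transpose (\<Psi> (snd q)) *v fst q = fst q v* \<Psi> (snd q)"
    by (metis transpose_transpose vector_transpose_matrix)
  finally show ?thesis by (simp add: hPsi_def)
qed

lemma hPsi_le:
  assumes "orthogonal_matrix (\<Psi> (snd p))" "orthogonal_matrix (\<Psi> (snd q))"
    "norm (fst p) = 1" "norm (fst q) = 1" "\<beta> > 0"
  shows "hPsi \<beta> \<Psi> p q \<le> exp \<beta> / \<beta>"
proof -
  let ?a = "fst p v* \<Psi> (snd p)" and ?b = "fst q v* \<Psi> (snd q)"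
  have "norm ?a = 1" "norm ?b = 1" using assms by (simp_all add: orth_norm2)
  then have "?a \<bullet> ?b \<le> 1" using norm_cauchy_schwarz[of ?a ?b] by simp
  then have "exp (\<beta> * (?a \<bullet> ?b)) \<le> exp \<beta>" using assms(5)
    by (simp add: mult_left_le)
  then show ?thesis using assms(5) unfolding hPsi_alt by (simp add: divide_right_mono)
qed

lemma hPsi_nonneg: "\<beta> > 0 \<Longrightarrow> hPsi \<beta> \<Psi> p q \<ge> 0"
  by (simp add: hPsi_def)

lemma energy_le:
  assumes mu: "\<mu> \<in> Peta eta" and O: "measurable_O eta \<Psi>" and beta: "\<beta> > 0"
  shows "prompt_energy (hPsi \<beta> \<Psi>) \<mu> \<le> exp \<beta> / (2 * \<beta>)"
proof -
  interpret prob_space \<mu> using mu by (simp add: Peta_def)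
  have sp: "space \<mu> = sphere 0 1 \<times> space eta"
  proof -
    have "sets \<mu> = sets (XZ eta)" using mu by (simp add: Peta_def)
    then have "space \<mu> = space (XZ eta)" by (rule sets_eq_imp_space_eq)
    then show ?thesis by (simp add: space_XZ)
  qed
  have hle: "hPsi \<beta> \<Psi> p q \<le> exp \<beta> / \<beta>" if "p \<in> space \<mu>" "q \<in> space \<mu>" for p q
    using that O beta by (intro hPsi_le) (auto simp: sp measurable_O_def)
  have gen: "(\<integral>x. f x \<partial>\<mu>) \<le> exp \<beta> / \<beta>" if "\<And>x. x \<in> space \<mu> \<Longrightarrow> f x \<le> exp \<beta> / \<beta>" for f
  proof (cases "integrable \<mu> f")
    case True
    then have "(\<integral>x. f x \<partial>\<mu>) \<le> (\<integral>x. exp \<beta> / \<beta> \<partial>\<mu>)"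
      by (intro integral_mono that) auto
    also have "\<dots> = exp \<beta> / \<beta>" by (simp add: prob_space)
    finally show ?thesis .
  next
    case False
    then show ?thesis using beta by (simp add: not_integrable_integral_eq)
  qed
  have inner: "(\<integral>q. hPsi \<beta> \<Psi> p q \<partial>\<mu>) \<le> exp \<beta> / \<beta>" if "p \<in> space \<mu>" for p
    by (rule gen) (rule hle[OF that])
  have "(\<integral>p. (\<integral>q. hPsi \<beta> \<Psi> p q \<partial>\<mu>) \<partial>\<mu>) \<le> exp \<beta> / \<beta>"
    by (rule gen) (rule inner)
  then show ?thesis unfolding prompt_energy_def by simp
qed

lemma Gamma_meas:
  assumes G: "G \<in> eta \<rightarrow>\<^sub>M Sph"
  shows "(\<lambda>z. (G z, z)) \<in> eta \<rightarrow>\<^sub>M XZ eta"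
  unfolding XZ_def using G by measurable

lemma Gamma_props:
  assumes eta: "prob_space eta" and G: "G \<in> eta \<rightarrow>\<^sub>M Sph"
  shows "Gamma eta G \<in> Peta eta" "distr (Gamma eta G) Sph fst = distr eta Sph G"
proof -
  note gm = Gamma_meas[OF G]
  have "prob_space (Gamma eta G)" unfolding Gamma_def
    using eta gm by (simp add: prob_space.prob_space_distr)
  moreover have "distr (Gamma eta G) eta snd = eta"
    unfolding Gamma_def
    by (subst distr_distr[OF _ gm]) (auto simp: XZ_def comp_def)
  ultimately show "Gamma eta G \<in> Peta eta" by (simp add: Peta_def Gamma_def)
  show "distr (Gamma eta G) Sph fst = distr eta Sph G"
    unfolding Gamma_def
    by (subst distr_distr[OF _ gm]) (auto simp: XZ_def comp_def)
qed

lemma V_meas: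
  assumes O: "measurable_O eta \<Psi>"
  shows "(\<lambda>p. fst p v* \<Psi> (snd p)) \<in> borel_measurable (XZ eta)"
proof -
  have f: "fst \<in> borel_measurable (XZ eta)"
    unfolding XZ_def Sph_def
    by (rule measurable_compose[OF measurable_fst]) (simp add: measurable_restrict_space1)
  have s: "(\<lambda>p. \<Psi> (snd p)) \<in> borel_measurable (XZ eta)"
    unfolding XZ_def using O by (auto simp: measurable_O_def intro: measurable_compose[OF measurable_snd])
  have "(\<lambda>p. transpose (\<Psi> (snd p)) *v fst p) \<in> borel_measurable (XZ eta)"
    by (intro meas_mv meas_transpose s f)
  then show ?thesis by simp
qed

lemma h_meas2:
  assumes O: "measurable_O eta \<Psi>"
  shows "(\<lambda>(p, q). hPsi \<beta> \<Psi> p q) \<in> borel_measurable (XZ eta \<Otimes>\<^sub>M XZ eta)"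
proof -
  note V[measurable] = V_meas[OF O]
  have "(\<lambda>x. fst (fst x) v* \<Psi> (snd (fst x))) \<in> borel_measurable (XZ eta \<Otimes>\<^sub>M XZ eta)"
    by measurable
  moreover have "(\<lambda>x. fst (snd x) v* \<Psi> (snd (snd x))) \<in> borel_measurable (XZ eta \<Otimes>\<^sub>M XZ eta)"
    by measurable
  ultimately show ?thesis
    unfolding hPsi_alt case_prod_beta by measurable
qed

lemma h_meas1:
  assumes O: "measurable_O eta \<Psi>"
  shows "(\<lambda>q. hPsi \<beta> \<Psi> p q) \<in> borel_measurable (XZ eta)"
proof -
  note V = V_meas[OF O]
  show ?thesis unfolding hPsi_alt using V by measurable
qed

lemma energy_star:
  assumes eta: "prob_space eta" and O: "measurable_O eta \<Psi>" and u: "u \<in> sphere 0 1"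
  shows "prompt_energy (hPsi \<beta> \<Psi>) (Gamma eta (\<lambda>z. \<Psi> z *v u)) = exp \<beta> / (2 * \<beta>)"
    "(\<lambda>z. \<Psi> z *v u) \<in> eta \<rightarrow>\<^sub>M Sph"
proof -
  interpret eta: prob_space eta by fact
  let ?G = "\<lambda>z. \<Psi> z *v u"
  have Gb: "?G \<in> borel_measurable eta"
    using O by (intro meas_mv) (auto simp: measurable_O_def)
  have Gs: "?G z \<in> sphere 0 1" if "z \<in> space eta" for z
    using O that u by (auto simp: measurable_O_def orth_norm)
  show GS: "?G \<in> eta \<rightarrow>\<^sub>M Sph"
    unfolding Sph_def using Gb Gs by (intro measurable_restrict_space2) auto
  note gm = Gamma_meas[OF GS]
  let ?g = "\<lambda>z. (?G z, z)"
  let ?\<Gamma> = "Gamma eta ?G"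
  interpret Gm: prob_space ?\<Gamma> using Gamma_props(1)[OF eta GS] by (simp add: Peta_def)
  have val: "hPsi \<beta> \<Psi> (?g z) (?g w) = 1/\<beta> * exp \<beta>" if "z \<in> space eta" "w \<in> space eta" for z w
  proof -
    have "?G z v* \<Psi> z = u" "?G w v* \<Psi> w = u"
      using O that by (metis measurable_O_def orth_transpose_mult vector_transpose_matrix transpose_transpose)+
    moreover have "u \<bullet> u = 1" using u by (simp add: dot_square_norm)
    ultimately show ?thesis unfolding hPsi_alt by simp
  qed
  have inner: "(\<integral>q. hPsi \<beta> \<Psi> p q \<partial>?\<Gamma>) = (\<integral>w. hPsi \<beta> \<Psi> p (?g w) \<partial>eta)" for p
    unfolding Gamma_def by (rule integral_distr[OF gm h_meas1[OF O]])
  have Fm: "(\<lambda>p. \<integral>q. hPsi \<beta> \<Psi> p q \<partial>?\<Gamma>) \<in> borel_measurable (XZ eta)"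
  proof -
    have "sets ?\<Gamma> = sets (XZ eta)" by (simp add: Gamma_def)
    then have "(\<lambda>(p, q). hPsi \<beta> \<Psi> p q) \<in> borel_measurable (XZ eta \<Otimes>\<^sub>M ?\<Gamma>)"
      using h_meas2[OF O] by (simp cong: sets_pair_measure_cong measurable_cong_sets)
    then show ?thesis by (rule Gm.borel_measurable_lebesgue_integral)
  qed
  have "(\<integral>p. (\<integral>q. hPsi \<beta> \<Psi> p q \<partial>?\<Gamma>) \<partial>?\<Gamma>) = (\<integral>z. (\<integral>q. hPsi \<beta> \<Psi> (?g z) q \<partial>?\<Gamma>) \<partial>eta)"
    by (subst Gamma_def, rule integral_distr[OF gm Fm])
  also have "\<dots> = (\<integral>z. (\<integral>w. 1/\<beta> * exp \<beta> \<partial>eta) \<partial>eta)"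
  proof (intro Bochner_Integration.integral_cong refl)
    fix z assume z: "z \<in> space eta"
    show "(\<integral>q. hPsi \<beta> \<Psi> (?g z) q \<partial>?\<Gamma>) = (\<integral>w. 1/\<beta> * exp \<beta> \<partial>eta)"
      unfolding inner by (intro Bochner_Integration.integral_cong refl val z)
  qed
  also have "\<dots> = 1/\<beta> * exp \<beta>" by (simp add: eta.prob_space)
  finally show "prompt_energy (hPsi \<beta> \<Psi>) ?\<Gamma> = exp \<beta> / (2 * \<beta>)"
    unfolding prompt_energy_def by simp
qed

definition Hh :: "real^'n \<Rightarrow> real^'n^'n" where
  "Hh v = mat 1 - (2 / (v \<bullet> v)) *\<^sub>R (\<chi> i j. v$i * v$j)"

lemma Hh_apply: "Hh v *v x = x - (2 * (v \<bullet> x) / (v \<bullet> v)) *\<^sub>R v"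
proof -
  have "(\<chi> i j. v$i * v$j) *v x = (v \<bullet> x) *\<^sub>R v"
    by (simp add: vec_eq_iff matrix_vector_mult_def inner_vec_def sum_distrib_left mult_ac)
  moreover have "((2 / (v \<bullet> v)) *\<^sub>R (\<chi> i j. v$i * v$j)) *v x = (2 / (v \<bullet> v)) *\<^sub>R ((\<chi> i j. v$i * v$j) *v x)"
    by (simp add: vec_eq_iff matrix_vector_mult_def sum_distrib_left mult_ac)
  ultimately show ?thesis
    by (simp add: Hh_def matrix_vector_mult_diff_rdistrib)
qed

lemma Hh_orth: "orthogonal_matrix (Hh v)"
proof -
  have n: "norm (Hh v *v x) = norm x" for x
  proof -
    let ?c = "2 * (v \<bullet> x) / (v \<bullet> v)"
    have "(x - ?c *\<^sub>R v) \<bullet> (x - ?c *\<^sub>R v) = x \<bullet> x - 2 * ?c * (v \<bullet> x) + ?c * ?c * (v \<bullet> v)"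
      by (simp add: algebra_simps inner_commute)
    also have "\<dots> = x \<bullet> x"
      by (cases "v \<bullet> v = 0") (simp_all add: field_simps power2_eq_square)
    finally have "norm (x - ?c *\<^sub>R v) ^ 2 = norm x ^ 2" by (simp add: power2_norm_eq_inner)
    then show ?thesis by (simp add: Hh_apply power2_eq_iff_nonneg)
  qed
  have "orthogonal_transformation (\<lambda>x. Hh v *v x)"
    using n by (simp add: orthogonal_transformation matrix_vector_mul_linear)
  then show ?thesis
    using orthogonal_transformation_matrix[of "\<lambda>x. Hh v *v x"] by simp
qed

lemma Hh_maps:
  fixes u g :: "real^'n"
  assumes "norm u = 1" "norm g = 1"
  shows "Hh (u - g) *v u = g"
proof (cases "u = g")
  case True
  then show ?thesis by (simp add: Hh_apply)
next
  case False
  let ?v = "u - g"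
  have uu: "u \<bullet> u = 1" "g \<bullet> g = 1" using assms by (simp_all add: dot_square_norm)
  have vu: "?v \<bullet> u = 1 - g \<bullet> u" using uu by (simp add: inner_diff_left)
  have vv: "?v \<bullet> ?v = 2 * (1 - g \<bullet> u)" using uu by (simp add: inner_diff inner_commute)
  have "?v \<bullet> ?v \<noteq> 0" using False by simp
  then have "1 - g \<bullet> u \<noteq> 0" using vv by (metis mult_zero_right)
  then have "2 * (?v \<bullet> u) / (?v \<bullet> ?v) = 1" unfolding vu vv by simp
  then show ?thesis by (simp only: Hh_apply) simp
qed

lemma Hh_meas: "Hh \<in> borel_measurable borel"
proof (rule borel_measurable_continuous_countable_exceptions[of "{0}"])
  show "continuous_on (- {0}) Hh"
    unfolding Hh_def by (intro continuous_intros) auto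
qed simp

lemma part2:
  assumes eta: "prob_space eta" and u: "u \<in> sphere 0 1" and G: "G \<in> eta \<rightarrow>\<^sub>M Sph" and beta: "\<beta> > 0"
  shows "\<exists>\<Psi>G. measurable_O eta \<Psi>G \<and> (\<forall>z\<in>space eta. \<Psi>G z *v u = G z) \<and>
       Gamma eta G \<in> Peta eta \<and>
       (\<forall>\<mu>\<in>Peta eta. prompt_energy (hPsi \<beta> \<Psi>G) \<mu> \<le> prompt_energy (hPsi \<beta> \<Psi>G) (Gamma eta G)) \<and>
       distr (Gamma eta G) Sph fst = distr eta Sph G"
proof -
  have Gb: "G \<in> borel_measurable eta" and Gs: "\<And>z. z \<in> space eta \<Longrightarrow> G z \<in> sphere 0 1"
    using G unfolding Sph_def measurable_restrict_space2_iff by auto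
  define \<Psi> where "\<Psi> z = Hh (u - G z)" for z
  have O: "measurable_O eta \<Psi>"
    unfolding measurable_O_def \<Psi>_def
    using Gb by (auto intro: measurable_compose[OF _ Hh_meas] Hh_orth)
  have eq: "\<Psi> z *v u = G z" if "z \<in> space eta" for z
    using Gs[OF that] u unfolding \<Psi>_def by (intro Hh_maps) auto
  have GG: "Gamma eta G = Gamma eta (\<lambda>z. \<Psi> z *v u)"
    unfolding Gamma_def by (intro distr_cong) (auto simp: eq)
  have E: "prompt_energy (hPsi \<beta> \<Psi>) (Gamma eta G) = exp \<beta> / (2 * \<beta>)"
    unfolding GG by (rule energy_star(1)[OF eta O u])
  show ?thesis
    using O eq Gamma_props[OF eta G] E energy_le[OF _ O beta] by auto
qed

context prob_space
begin

lemma halve_subset: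
  assumes na: "nonatomic M" and B: "B \<in> sets M" "measure M B > 0"
  shows "\<exists>C\<in>sets M. C \<subseteq> B \<and> 0 < measure M C \<and> measure M C \<le> measure M B / 2"
proof -
  have "\<not> is_atom M B" using na by (simp add: nonatomic_def)
  moreover have "emeasure M B > 0" using B by (simp add: emeasure_eq_measure)
  ultimately obtain D where D: "D \<in> sets M" "D \<subseteq> B" "emeasure M D \<noteq> 0" "emeasure M D \<noteq> emeasure M B"
    using B by (auto simp: is_atom_def)
  then have D2: "measure M D > 0" "measure M D \<noteq> measure M B"
    by (auto simp: emeasure_eq_measure measure_nonneg less_le)
  have "measure M D \<le> measure M B" using D B by (intro finite_measure_mono) auto
  then have lt: "measure M D < measure M B" using D2 by simp
  have BD: "measure M (B - D) = measure M B - measure M D"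
    using D B by (intro finite_measure_Diff) auto
  show ?thesis
  proof (cases "measure M D \<le> measure M B / 2")
    case True then show ?thesis using D D2 by blast
  next
    case False
    then show ?thesis using D B BD lt
      by (intro bexI[of _ "B - D"]) auto
  qed
qed

lemma small_subset:
  assumes na: "nonatomic M" and A: "A \<in> sets M" "measure M A > 0" and e: "e > 0"
  shows "\<exists>C\<in>sets M. C \<subseteq> A \<and> 0 < measure M C \<and> measure M C < e"
proof -
  have ind: "\<exists>C\<in>sets M. C \<subseteq> A \<and> 0 < measure M C \<and> measure M C \<le> measure M A / 2^n" for n
  proof (induction n)
    case 0 then show ?case using A by auto
  next
    case (Suc n)
    then obtain C where C: "C\<in>sets M" "C \<subseteq> A" "0 < measure M C" "measure M C \<le> measure M A / 2^n" by blast
    from halve_subset[OF na C(1,3)] obtain D where D: "D\<in>sets M" "D \<subseteq> C" "0 < measure M D" "measure M D \<le> measure M C / 2" by blast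
    have "measure M D * 2^Suc n = (2 * measure M D) * 2^n" by simp
    also have "\<dots> \<le> measure M C * 2^n" using D(4) by (intro mult_right_mono) auto
    also have "\<dots> \<le> measure M A" using C(4) by (simp add: pos_le_divide_eq)
    finally have "measure M D \<le> measure M A / 2^Suc n" by (simp add: pos_le_divide_eq del: power_Suc)
    then show ?case using D C by blast
  qed
  obtain n where n: "(1/2::real)^n < e" using real_arch_pow_inv[OF e, of "1/2"] by auto
  obtain C where C: "C\<in>sets M" "C \<subseteq> A" "0 < measure M C" "measure M C \<le> measure M A / 2^n" using ind by blast
  have "measure M A / 2^n \<le> 1 / 2^n" using prob_le_1[of A] by (simp add: divide_right_mono)
  also have "\<dots> = (1/2)^n" by (simp add: power_divide)
  finally show ?thesis using C n by (intro bexI[of _ C]) auto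
qed

lemma sierpinski:
  assumes na: "nonatomic M" and A: "A \<in> sets M" and t: "0 \<le> t" "t \<le> measure M A"
  shows "\<exists>B\<in>sets M. B \<subseteq> A \<and> measure M B = t"
proof -
  define Q where "Q S = {measure M C | C. C \<in> sets M \<and> C \<subseteq> A - S \<and> measure M S + measure M C \<le> t}" for S
  define P where "P S C \<longleftrightarrow> C \<in> sets M \<and> C \<subseteq> A - S \<and> measure M S + measure M C \<le> t \<and> Sup (Q S) \<le> 2 * measure M C" for S C
  define pick where "pick S = (SOME C. P S C)" for S
  have Qbdd: "bdd_above (Q S)" for S
    unfolding Q_def by (intro bdd_aboveI[of _ 1]) auto
  have pick_ok: "P S (pick S)" if S: "S \<in> sets M" "S \<subseteq> A" "measure M S \<le> t" for S
  proof -
    have "\<exists>C. P S C"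
    proof (cases "Sup (Q S) \<le> 0")
      case True
      then show ?thesis using S by (intro exI[of _ "{}"]) (auto simp: P_def)
    next
      case False
      have ne: "Q S \<noteq> {}" using S unfolding Q_def by (auto intro!: exI[of _ "{}"])
      have "Sup (Q S) / 2 < Sup (Q S)" using False by simp
      then obtain q where "q \<in> Q S" "Sup (Q S) / 2 < q"
        using less_cSup_iff[OF ne Qbdd] by blast
      then show ?thesis unfolding Q_def P_def by auto
    qed
    then show ?thesis unfolding pick_def by (rule someI_ex)
  qed
  define B where "B = rec_nat {} (\<lambda>n S. S \<union> pick S)"
  have B0: "B 0 = {}" and BS: "B (Suc n) = B n \<union> pick (B n)" for n by (simp_all add: B_def)
  have inv: "B n \<in> sets M \<and> B n \<subseteq> A \<and> measure M (B n) \<le> t" for n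
  proof (induction n)
    case 0 then show ?case using A t by (simp add: B0)
  next
    case (Suc n)
    have p: "P (B n) (pick (B n))" using Suc by (intro pick_ok) auto
    then have "measure M (B n \<union> pick (B n)) = measure M (B n) + measure M (pick (B n))"
      using Suc by (intro finite_measure_Union) (auto simp: P_def)
    then show ?case using p Suc by (auto simp: BS P_def)
  qed
  have pk: "P (B n) (pick (B n))" for n using inv[of n] by (intro pick_ok) auto
  have mS: "measure M (B (Suc n)) = measure M (B n) + measure M (pick (B n))" for n
    using pk[of n] inv[of n] unfolding BS P_def by (intro finite_measure_Union) auto
  have inc: "incseq B" by (rule incseq_SucI) (simp add: BS)
  have lim: "(\<lambda>n. measure M (B n)) \<longlonglongrightarrow> measure M (\<Union>n. B n)"
    using inv inc by (intro finite_Lim_measure_incseq) auto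
  have lim2: "(\<lambda>n. measure M (pick (B n))) \<longlonglongrightarrow> 0"
  proof -
    have "(\<lambda>n. measure M (B (Suc n)) - measure M (B n)) \<longlonglongrightarrow> measure M (\<Union>n. B n) - measure M (\<Union>n. B n)"
      by (intro tendsto_diff lim LIMSEQ_Suc)
    then show ?thesis by (simp add: mS)
  qed
  let ?U = "\<Union>n. B n"
  have Usets: "?U \<in> sets M" using inv by auto
  have UA: "?U \<subseteq> A" using inv by auto
  have Ule: "measure M ?U \<le> t"
    using lim inv by (intro LIMSEQ_le_const2[OF lim]) auto
  have "measure M ?U = t"
  proof (rule ccontr)
    assume "measure M ?U \<noteq> t"
    then have lt: "measure M ?U < t" using Ule by simp
    have "measure M (A - ?U) = measure M A - measure M ?U"
      using A Usets UA by (intro finite_measure_Diff) auto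
    then have "measure M (A - ?U) > 0" using lt t by simp
    then obtain D where D: "D \<in> sets M" "D \<subseteq> A - ?U" "0 < measure M D" "measure M D < t - measure M ?U"
      using small_subset[OF na, of "A - ?U" "t - measure M ?U"] A Usets lt by auto
    have ge: "measure M D / 2 \<le> measure M (pick (B n))" for n
    proof -
      have "measure M (B n) \<le> measure M ?U"
        using inv Usets by (intro finite_measure_mono) auto
      then have "measure M D \<in> Q (B n)"
        unfolding Q_def using D by (intro CollectI exI[of _ D]) auto
      then have "measure M D \<le> Sup (Q (B n))" by (intro cSup_upper Qbdd)
      then show ?thesis using pk[of n] by (simp add: P_def)
    qed
    have "eventually (\<lambda>n. measure M (pick (B n)) < measure M D / 2) sequentially"
      using lim2 D(3) by (intro order_tendstoD(2)) auto
    then obtain n where "measure M (pick (B n)) < measure M D / 2" by (auto dest: eventually_happens)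
    then show False using ge[of n] by simp
  qed
  then show ?thesis using Usets UA by blast
qed

end

context prob_space
begin

lemma split_countable:
  assumes na: "nonatomic M" and A: "A \<in> sets M" and A0: "measure M A = 0 \<Longrightarrow> A = {}"
    and t: "\<And>i. 0 \<le> t i" and ts: "t sums measure M A"
  shows "\<exists>Bs. (\<forall>i. Bs i \<in> sets M \<and> Bs i \<subseteq> A \<and> measure M (Bs i) = t i \<and> (t i = 0 \<longrightarrow> Bs i = {}))
     \<and> disjoint_family Bs \<and> (\<Union>i. Bs i) = A"
proof (cases "measure M A = 0")
  case True
  then have "A = {}" by (rule A0)
  have "t i = 0" for i
  proof -
    have "summable t" using ts by (simp add: sums_summable)
    moreover have "suminf t = 0" using ts True by (simp add: sums_unique[symmetric])
    ultimately show ?thesis using t by (simp add: suminf_eq_zero_iff)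
  qed
  then show ?thesis using \<open>A = {}\<close> by (intro exI[of _ "\<lambda>_. {}"]) (auto simp: disjoint_family_on_def)
next
  case False
  have summ: "summable t" using ts by (simp add: sums_summable)
  have suminfA: "suminf t = measure M A" using ts by (simp add: sums_unique[symmetric])
  define pick where "pick S x = (if x = 0 then {} else SOME C. C \<in> sets M \<and> C \<subseteq> A - S \<and> measure M C = x)" for S x
  define U where "U = rec_nat {} (\<lambda>n S. S \<union> pick S (t n))"
  have U0: "U 0 = {}" and US: "U (Suc n) = U n \<union> pick (U n) (t n)" for n by (simp_all add: U_def)
  have pick_ok: "pick S x \<in> sets M \<and> pick S x \<subseteq> A - S \<and> measure M (pick S x) = x"
    if S: "S \<in> sets M" "S \<subseteq> A" and x: "0 \<le> x" "measure M S + x \<le> measure M A" for S x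
  proof (cases "x = 0")
    case True then show ?thesis by (simp add: pick_def)
  next
    case False
    have "measure M (A - S) = measure M A - measure M S" using S A by (intro finite_measure_Diff) auto
    then have "\<exists>C\<in>sets M. C \<subseteq> A - S \<and> measure M C = x"
      using sierpinski[OF na, of "A - S" x] S A x by auto
    then have "\<exists>C. C \<in> sets M \<and> C \<subseteq> A - S \<and> measure M C = x" by blast
    from someI_ex[OF this] show ?thesis using False by (simp add: pick_def)
  qed
  have psum: "(\<Sum>j<n. t j) \<le> measure M A" for n
    using sum_le_suminf[OF summ, of "{..<n}"] t suminfA by auto
  have inv: "U n \<in> sets M \<and> U n \<subseteq> A \<and> measure M (U n) = (\<Sum>j<n. t j)" for n
  proof (induction n)
    case 0 then show ?case by (simp add: U0)
  next
    case (Suc n)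
    have p: "pick (U n) (t n) \<in> sets M \<and> pick (U n) (t n) \<subseteq> A - U n \<and> measure M (pick (U n) (t n)) = t n"
      using Suc psum[of "Suc n"] t by (intro pick_ok) auto
    then have "measure M (U n \<union> pick (U n) (t n)) = measure M (U n) + measure M (pick (U n) (t n))"
      using Suc by (intro finite_measure_Union) auto
    then show ?case using p Suc by (auto simp: US)
  qed
  define B' where "B' n = pick (U n) (t n)" for n
  have B'ok: "B' n \<in> sets M \<and> B' n \<subseteq> A - U n \<and> measure M (B' n) = t n" for n
    unfolding B'_def using inv[of n] psum[of "Suc n"] t by (intro pick_ok) auto
  have B'0: "t n = 0 \<Longrightarrow> B' n = {}" for n by (simp add: B'_def pick_def)
  have inc: "incseq U" by (rule incseq_SucI) (simp add: US)
  have B'U: "B' m \<subseteq> U n" if "m < n" for m n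
  proof -
    have "B' m \<subseteq> U (Suc m)" by (simp add: US B'_def)
    also have "\<dots> \<subseteq> U n" using inc that by (simp add: incseq_def)
    finally show ?thesis .
  qed
  have disj: "disjoint_family B'"
    unfolding disjoint_family_on_def
  proof (intro ballI impI)
    fix m n :: nat assume "m \<noteq> n"
    then consider "m < n" | "n < m" by linarith
    then show "B' m \<inter> B' n = {}"
      using B'U B'ok by cases blast+
  qed
  have Bsum: "(\<lambda>i. measure M (B' i)) sums measure M (\<Union>i. B' i)"
    using B'ok disj by (intro finite_measure_UNION) auto
  then have "measure M (\<Union>i. B' i) = measure M A"
    using ts B'ok by (simp add: sums_unique2[OF _ ts])
  define R where "R = A - (\<Union>i. B' i)"
  have Rs: "R \<in> sets M" unfolding R_def using A B'ok by auto
  have Rm: "measure M R = 0"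
    unfolding R_def using \<open>measure M (\<Union>i. B' i) = measure M A\<close> A B'ok
    by (subst finite_measure_Diff) auto
  obtain i0 where i0: "t i0 \<noteq> 0"
  proof (rule ccontr)
    assume "\<not> thesis"
    then have "\<forall>i. t i = 0" using that by blast
    then have "t = (\<lambda>_. 0)" by auto
    then have "suminf t = 0" by simp
    then show False using suminfA False by simp
  qed
  define Bs where "Bs i = B' i \<union> (if i = i0 then R else {})" for i
  have "measure M (Bs i) = t i" for i
  proof (cases "i = i0")
    case True
    have "measure M (B' i \<union> R) = measure M (B' i) + measure M R"
      using B'ok Rs by (intro finite_measure_Union) (auto simp: R_def)
    then show ?thesis using True Rm B'ok by (simp add: Bs_def)
  next
    case False then show ?thesis using B'ok by (simp add: Bs_def)
  qed
  moreover have "Bs i \<in> sets M \<and> Bs i \<subseteq> A" for i using B'ok Rs by (auto simp: Bs_def R_def)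
  moreover have "t i = 0 \<longrightarrow> Bs i = {}" for i using i0 B'0 by (auto simp: Bs_def)
  moreover have "disjoint_family Bs"
    using disj unfolding disjoint_family_on_def Bs_def R_def by auto
  moreover have "(\<Union>i. Bs i) = A"
  proof
    show "(\<Union>i. Bs i) \<subseteq> A" using B'ok unfolding Bs_def R_def by (auto split: if_splits)
    show "A \<subseteq> (\<Union>i. Bs i)"
    proof
      fix x assume "x \<in> A"
      show "x \<in> (\<Union>i. Bs i)"
      proof (cases "\<exists>i. x \<in> B' i")
        case True then show ?thesis unfolding Bs_def by blast
      next
        case False then have "x \<in> Bs i0" using \<open>x \<in> A\<close> unfolding Bs_def R_def by simp
        then show ?thesis by blast
      qed
    qed
  qed
  ultimately show ?thesis by blast
qed

end

lemma inner_approx: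
  fixes N :: "'a::euclidean_space measure"
  assumes fin: "finite_measure N" and sb: "sets N = sets borel" and D: "D \<in> sets borel" and e: "e > 0"
  shows "\<exists>K. compact K \<and> K \<subseteq> D \<and> measure N (D - K) < e"
proof -
  interpret finite_measure N by fact
  have Ds: "D \<in> sets N" using D sb by simp
  show ?thesis
  proof (cases "measure N D < e")
    case True then show ?thesis by (intro exI[of _ "{}"]) auto
  next
    case False
    have reg: "emeasure N D = (SUP K \<in> {K. K \<subseteq> D \<and> compact K}. emeasure N K)"
      by (rule inner_regular[OF sb _ D]) simp
    have "ennreal (measure N D - e) < ennreal (measure N D)"
      using False e by (subst ennreal_less_iff) auto
    also have "\<dots> = (SUP K \<in> {K. K \<subseteq> D \<and> compact K}. emeasure N K)"
      using reg by (simp add: emeasure_eq_measure)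
    finally obtain K where K: "K \<subseteq> D" "compact K" "ennreal (measure N D - e) < emeasure N K"
      by (auto simp: less_SUP_iff)
    have Ks: "K \<in> sets N" using K sb by (simp add: borel_compact)
    have "measure N D - e < measure N K"
      using K(3) False by (simp add: emeasure_eq_measure ennreal_less_iff)
    moreover have "measure N (D - K) = measure N D - measure N K"
      using Ds Ks K by (intro finite_measure_Diff) auto
    ultimately show ?thesis using K by (intro exI[of _ K]) auto
  qed
qed

lemma compact_decomp:
  fixes N :: "'a::euclidean_space measure"
  assumes fin: "finite_measure N" and sb: "sets N = sets borel" and D: "D \<in> sets borel"
  shows "\<exists>K::nat \<Rightarrow> 'a set. (\<forall>i. compact (K i) \<and> K i \<subseteq> D) \<and> disjoint_family K \<and> measure N (D - (\<Union>i. K i)) = 0"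
proof -
  interpret finite_measure N by fact
  define pk where "pk E n = (SOME K. compact K \<and> K \<subseteq> E \<and> measure N (E - K) < 1 / (Suc n))" for E and n :: nat
  have pk_ok: "compact (pk E n) \<and> pk E n \<subseteq> E \<and> measure N (E - pk E n) < 1 / (Suc n)" if "E \<in> sets borel" for E n
    unfolding pk_def by (rule someI_ex) (rule inner_approx[OF fin sb that], simp)
  define W where "W = rec_nat {} (\<lambda>n S. S \<union> pk (D - S) n)"
  have W0: "W 0 = {}" and WS: "W (Suc n) = W n \<union> pk (D - W n) n" for n by (simp_all add: W_def)
  have inv: "compact (W n) \<and> W n \<subseteq> D" for n
  proof (induction n)
    case 0 then show ?case by (simp add: W0)
  next
    case (Suc n)
    have "D - W n \<in> sets borel" using Suc D by (auto intro: borel_compact)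
    then show ?case using pk_ok[of "D - W n" n] Suc by (auto simp: WS)
  qed
  define K where "K n = pk (D - W n) n" for n
  have Kok: "compact (K n) \<and> K n \<subseteq> D - W n \<and> measure N ((D - W n) - K n) < 1 / Suc n" for n
    unfolding K_def using inv[of n] D by (intro pk_ok) (auto intro: borel_compact)
  have inc: "incseq W" by (rule incseq_SucI) (simp add: WS)
  have KW: "K m \<subseteq> W n" if "m < n" for m n
  proof -
    have "K m \<subseteq> W (Suc m)" by (simp add: WS K_def)
    also have "\<dots> \<subseteq> W n" using inc that by (simp add: incseq_def)
    finally show ?thesis .
  qed
  have disj: "disjoint_family K"
    unfolding disjoint_family_on_def
  proof (intro ballI impI)
    fix m n :: nat assume "m \<noteq> n"
    then consider "m < n" | "n < m" by linarith
    then show "K m \<inter> K n = {}"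
      using KW Kok by cases blast+
  qed
  have Wun: "W n = (\<Union>m<n. K m)" for n
    by (induction n) (auto simp: W0 WS K_def lessThan_Suc)
  have Ds: "D \<in> sets N" using D sb by simp
  have Kset: "K i \<in> sets N" for i using Kok[of i] sb by (simp add: borel_compact)
  have Rs: "D - (\<Union>i. K i) \<in> sets N" using Ds Kset by auto
  have small: "measure N (D - (\<Union>i. K i)) < 1 / Suc n" for n
  proof -
    have "D - (\<Union>i. K i) \<subseteq> (D - W n) - K n" unfolding Wun by auto
    then have "measure N (D - (\<Union>i. K i)) \<le> measure N ((D - W n) - K n)"
      using Ds Kok[of n] sb inv[of n] by (intro finite_measure_mono) (auto intro: borel_compact)
    then show ?thesis using Kok[of n] by simp
  qed
  have "measure N (D - (\<Union>i. K i)) \<le> 0"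
  proof (rule field_le_epsilon)
    fix e :: real assume "e > 0"
    obtain n :: nat where "1 / Suc n < e" using \<open>e > 0\<close> by (metis nat_approx_posE)
    then show "measure N (D - (\<Union>i. K i)) \<le> 0 + e" using small[of n] by simp
  qed
  then have "measure N (D - (\<Union>i. K i)) = 0" by (simp add: measure_le_0_iff)
  then show ?thesis using Kok disj by (intro exI[of _ K]) auto
qed



lemma fine_partition:
  fixes e :: real
  assumes e: "e > 0"
  shows "\<exists>P::nat \<Rightarrow> 'a::euclidean_space set. (\<forall>i. P i \<in> sets borel \<and> (\<forall>x\<in>P i. \<forall>y\<in>P i. dist x y \<le> e))
     \<and> disjoint_family P \<and> (\<Union>i. P i) = UNIV"
proof -
  obtain X :: "'a set" where X: "countable X" "X \<noteq> {}" "\<And>U. open U \<Longrightarrow> U \<noteq> {} \<Longrightarrow> \<exists>y\<in>X. y \<in> U"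
    using countable_dense_exists by blast
  define C where "C i = cball (from_nat_into X i) (e/2)" for i
  have cov: "(\<Union>i. C i) = UNIV"
  proof (intro set_eqI iffI UNIV_I)
    fix y :: 'a
    obtain d where d: "d \<in> X" "d \<in> ball y (e/2)" using X(3)[of "ball y (e/2)"] e by auto
    then have "from_nat_into X (to_nat_on X d) = d" using X(1) by (simp add: from_nat_into_to_nat_on)
    then have "y \<in> C (to_nat_on X d)"
      using d(2) unfolding C_def mem_cball mem_ball by (simp add: dist_commute)
    then show "y \<in> (\<Union>i. C i)" by blast
  qed
  define P where "P = disjointed C"
  have "range (disjointed C) \<subseteq> sets borel"
    by (rule sets.range_disjointed_sets) (auto simp: C_def)
  then have "P i \<in> sets borel" for i unfolding P_def by blast
  moreover have "\<forall>x\<in>P i. \<forall>y\<in>P i. dist x y \<le> e" for i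
  proof (intro ballI)
    fix x y assume "x \<in> P i" "y \<in> P i"
    then have "x \<in> C i" "y \<in> C i" using disjointed_subset[of C i] unfolding P_def by auto
    then have "dist (from_nat_into X i) x \<le> e/2" "dist (from_nat_into X i) y \<le> e/2"
      unfolding C_def mem_cball by auto
    then show "dist x y \<le> e" using dist_triangle[of x y "from_nat_into X i"] dist_commute[of x "from_nat_into X i"] by linarith
  qed
  moreover have "disjoint_family P" unfolding P_def by (rule disjoint_family_disjointed)
  moreover have "(\<Union>i. P i) = UNIV" unfolding P_def UN_disjointed_eq by (rule cov)
  ultimately show ?thesis by (intro exI[of _ P]) simp
qed

lemma piece_decomp:
  fixes N :: "'a::euclidean_space measure"
  assumes fin: "finite_measure N" and sb: "sets N = sets borel" and D: "D \<in> sets borel" and e: "e > 0"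
  shows "\<exists>K::nat \<Rightarrow> 'a set. (\<forall>i. compact (K i) \<and> K i \<subseteq> D \<and> (\<forall>x\<in>K i. \<forall>y\<in>K i. dist x y \<le> e))
     \<and> disjoint_family K \<and> measure N (D - (\<Union>i. K i)) = 0"
proof -
  interpret finite_measure N by fact
  from fine_partition[OF e] obtain P :: "nat \<Rightarrow> 'a set" where P0: "(\<forall>i. P i \<in> sets borel \<and> (\<forall>x\<in>P i. \<forall>y\<in>P i. dist x y \<le> e))
     \<and> disjoint_family P \<and> (\<Union>i. P i) = UNIV" ..
  then have P: "\<And>i. P i \<in> sets borel" "\<And>i. \<forall>x\<in>P i. \<forall>y\<in>P i. dist x y \<le> e"
    "disjoint_family P" "(\<Union>i. P i) = UNIV" by auto
  have "\<forall>i. \<exists>K::nat \<Rightarrow> 'a set. (\<forall>j. compact (K j) \<and> K j \<subseteq> D \<inter> P i) \<and> disjoint_family K \<and> measure N ((D \<inter> P i) - (\<Union>j. K j)) = 0"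
  proof
    fix i
    have "D \<inter> P i \<in> sets borel" using D P(1)[of i] by auto
    then show "\<exists>K::nat \<Rightarrow> 'a set. (\<forall>j. compact (K j) \<and> K j \<subseteq> D \<inter> P i) \<and> disjoint_family K \<and> measure N ((D \<inter> P i) - (\<Union>j. K j)) = 0"
      by (rule compact_decomp[OF fin sb])
  qed
  from choice[OF this] obtain KK :: "nat \<Rightarrow> nat \<Rightarrow> 'a set" where KK0: "\<forall>i. (\<forall>j. compact (KK i j) \<and> KK i j \<subseteq> D \<inter> P i) \<and> disjoint_family (KK i) \<and> measure N ((D \<inter> P i) - (\<Union>j. KK i j)) = 0"
    by (elim exE) (rule that, assumption)
  then have KK: "\<And>i j. compact (KK i j)" "\<And>i j. KK i j \<subseteq> D \<inter> P i" "\<And>i. disjoint_family (KK i)"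
    "\<And>i. measure N ((D \<inter> P i) - (\<Union>j. KK i j)) = 0"
    by auto
  define K where "K n = (case prod_decode n of (i, j) \<Rightarrow> KK i j)" for n
  have Kall: "(\<Union>n. K n) = (\<Union>i. \<Union>j. KK i j)"
  proof (intro set_eqI iffI)
    fix x assume "x \<in> (\<Union>n. K n)"
    then obtain n where n: "x \<in> K n" by blast
    obtain i j where "prod_decode n = (i, j)" by (cases "prod_decode n")
    then have "x \<in> KK i j" using n by (simp add: K_def)
    then show "x \<in> (\<Union>i. \<Union>j. KK i j)" by blast
  next
    fix x assume "x \<in> (\<Union>i. \<Union>j. KK i j)"
    then obtain i j where ij: "x \<in> KK i j" by blast
    have "K (prod_encode (i, j)) = KK i j" by (simp add: K_def)
    then show "x \<in> (\<Union>n. K n)" using ij by blast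
  qed
  have Kp: "compact (K n) \<and> K n \<subseteq> D \<and> (\<forall>x\<in>K n. \<forall>y\<in>K n. dist x y \<le> e)" for n
  proof -
    obtain i j where ij: "prod_decode n = (i, j)" by (cases "prod_decode n")
    have Kn: "K n = KK i j" by (simp add: K_def ij)
    show ?thesis unfolding Kn
    proof (intro conjI ballI)
      show "compact (KK i j)" by (rule KK(1))
      show "KK i j \<subseteq> D" using KK(2)[of i j] by simp
      fix x y assume "x \<in> KK i j" "y \<in> KK i j"
      then have "x \<in> P i" "y \<in> P i" using KK(2)[of i j] by auto
      then show "dist x y \<le> e" using P(2)[of i] by simp
    qed
  qed
  have Kd: "disjoint_family K"
    unfolding disjoint_family_on_def
  proof (intro ballI impI)
    fix m n :: nat assume "m \<noteq> n"
    obtain i j where mij: "prod_decode m = (i, j)" by (cases "prod_decode m")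
    obtain i' j' where nij: "prod_decode n = (i', j')" by (cases "prod_decode n")
    have "(i, j) \<noteq> (i', j')" using \<open>m \<noteq> n\<close> mij nij by (metis inj_prod_decode injD)
    have "KK i j \<inter> KK i' j' = {}"
    proof (cases "i = i'")
      case True
      then have "j \<noteq> j'" using \<open>(i, j) \<noteq> (i', j')\<close> by simp
      then show ?thesis using KK(3)[of i] True unfolding disjoint_family_on_def by simp
    next
      case False
      then have "P i \<inter> P i' = {}" using P(3) unfolding disjoint_family_on_def by simp
      then show ?thesis using KK(2)[of i j] KK(2)[of i' j'] by auto
    qed
    then show "K m \<inter> K n = {}" by (simp add: K_def mij nij)
  qed
  have Km: "measure N (D - (\<Union>i. K i)) = 0"
  proof -
    have sub: "D - (\<Union>i. K i) \<subseteq> (\<Union>i. (D \<inter> P i) - (\<Union>j. KK i j))"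
    proof
      fix x assume x: "x \<in> D - (\<Union>i. K i)"
      obtain i where i: "x \<in> P i" using P(4) by (metis UNIV_I UN_E)
      have "x \<notin> (\<Union>j. KK i j)" using x unfolding Kall by blast
      then show "x \<in> (\<Union>i. (D \<inter> P i) - (\<Union>j. KK i j))" using x i by blast
    qed
    have KKs: "KK i j \<in> sets N" for i j using KK(1) sb by (simp add: borel_compact)
    have Ps: "(D \<inter> P i) - (\<Union>j. KK i j) \<in> sets N" for i using D P(1) sb KKs by auto
    have "emeasure N (\<Union>i. (D \<inter> P i) - (\<Union>j. KK i j)) = 0"
      using KK(4) Ps by (intro emeasure_UN_eq_0) (auto simp: emeasure_eq_measure)
    moreover have "D - (\<Union>i. K i) \<in> sets N"
      using D sb Kall KKs by auto
    have "(\<Union>i. (D \<inter> P i) - (\<Union>j. KK i j)) \<in> sets N" using Ps by auto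
    then have "emeasure N (D - (\<Union>i. K i)) \<le> emeasure N (\<Union>i. (D \<inter> P i) - (\<Union>j. KK i j))"
      by (rule emeasure_mono[OF sub])
    ultimately have "emeasure N (D - (\<Union>i. K i)) = 0" by simp
    then show ?thesis by (simp add: emeasure_eq_measure)
  qed
  show ?thesis by (rule exI[of _ K]) (simp add: Kp Kd Km)
qed

definition cdec :: "(real^'n) measure \<Rightarrow> (real^'n) set \<Rightarrow> nat \<Rightarrow> nat \<Rightarrow> (real^'n) set" where
  "cdec N D k = (SOME K. (\<forall>i. compact (K i) \<and> K i \<subseteq> D \<and> (\<forall>x\<in>K i. \<forall>y\<in>K i. dist x y \<le> 1/2^k))
     \<and> disjoint_family K \<and> measure N (D - (\<Union>i. K i)) = 0)"

primrec piece :: "(real^'n) measure \<Rightarrow> nat list \<Rightarrow> (real^'n) set" where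
  "piece N [] = sphere 0 1"
| "piece N (i # xs) = cdec N (piece N xs) (Suc (length xs)) i"

declare piece.simps(2)[simp del]

locale pieces =
  fixes N :: "(real^'n) measure"
  assumes fin: "finite_measure N" and sb: "sets N = sets borel"
begin

lemma cdec_ok:
  assumes "D \<in> sets borel"
  shows "(\<forall>i. compact (cdec N D k i) \<and> cdec N D k i \<subseteq> D \<and> (\<forall>x\<in>cdec N D k i. \<forall>y\<in>cdec N D k i. dist x y \<le> 1/2^k))
     \<and> disjoint_family (cdec N D k) \<and> measure N (D - (\<Union>i. cdec N D k i)) = 0"
proof -
  have ex: "\<exists>K::nat \<Rightarrow> (real^'n) set. (\<forall>i. compact (K i) \<and> K i \<subseteq> D \<and> (\<forall>x\<in>K i. \<forall>y\<in>K i. dist x y \<le> 1/2^k))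
     \<and> disjoint_family K \<and> measure N (D - (\<Union>i. K i)) = 0"
    by (rule piece_decomp[OF fin sb assms]) simp
  show ?thesis unfolding cdec_def by (rule someI_ex[OF ex])
qed

lemma piece_compact: "compact (piece N xs)"
proof (induction xs)
  case Nil then show ?case by simp
next
  case (Cons i xs)
  then have "piece N xs \<in> sets borel" by (simp add: borel_compact)
  from cdec_ok[OF this] show ?case by (simp add: piece.simps(2))
qed

lemma piece_borel: "piece N xs \<in> sets borel"
  using piece_compact by (simp add: borel_compact)

lemma piece_sets: "piece N xs \<in> sets N"
  using piece_borel sb by simp

lemma piece_child: "piece N (i # xs) \<subseteq> piece N xs"
  using cdec_ok[OF piece_borel[of xs]] by (simp add: piece.simps(2))

lemma piece_sphere: "piece N xs \<subseteq> sphere 0 1"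
  by (induction xs) (use piece_child in auto)

lemma piece_disj: "disjoint_family (\<lambda>i. piece N (i # xs))"
  using cdec_ok[OF piece_borel[of xs]] by (simp add: piece.simps(2))

lemma piece_null: "measure N (piece N xs - (\<Union>i. piece N (i # xs))) = 0"
  using cdec_ok[OF piece_borel[of xs]] by (simp add: piece.simps(2))

lemma piece_diam: "x \<in> piece N xs \<Longrightarrow> y \<in> piece N xs \<Longrightarrow> dist x y \<le> 2 / 2^length xs"
proof (cases xs)
  case Nil
  assume "x \<in> piece N xs" "y \<in> piece N xs"
  then have "norm x = 1" "norm y = 1" using Nil by auto
  then show ?thesis using Nil norm_triangle_ineq4[of x y] by (simp add: dist_norm)
next
  case (Cons i ys)
  assume "x \<in> piece N xs" "y \<in> piece N xs"
  moreover have "\<forall>x\<in>piece N (i # ys). \<forall>y\<in>piece N (i # ys). dist x y \<le> 1/2^(Suc (length ys))"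
    using cdec_ok[OF piece_borel[of ys], of "Suc (length ys)"] unfolding piece.simps(2) by blast
  ultimately have "dist x y \<le> 1/2^(Suc (length ys))"
    using Cons by blast
  also have "\<dots> \<le> 2 / 2^length xs"
    using Cons divide_right_mono[of "1::real" 2 "2^length xs"] by (simp del: power_Suc)
  finally show ?thesis .
qed

lemma piece_sums: "(\<lambda>i. measure N (piece N (i # xs))) sums measure N (piece N xs)"
proof -
  interpret finite_measure N by (rule fin)
  have "(\<lambda>i. measure N (piece N (i # xs))) sums measure N (\<Union>i. piece N (i # xs))"
    using piece_sets piece_disj by (intro finite_measure_UNION) auto
  moreover have "measure N (\<Union>i. piece N (i # xs)) = measure N (piece N xs)"
  proof -
    have sub: "(\<Union>i. piece N (i # xs)) \<subseteq> piece N xs" using piece_child by auto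
    have "measure N (piece N xs - (\<Union>i. piece N (i # xs))) = measure N (piece N xs) - measure N (\<Union>i. piece N (i # xs))"
      using sub piece_sets by (intro finite_measure_Diff) auto
    then show ?thesis using piece_null[of xs] by simp
  qed
  ultimately show ?thesis by simp
qed

lemma piece_drop: "piece N xs \<subseteq> piece N (drop k xs)"
proof (induction xs arbitrary: k)
  case Nil then show ?case by simp
next
  case (Cons i xs)
  show ?case
  proof (cases k)
    case 0 then show ?thesis by simp
  next
    case (Suc k')
    then show ?thesis using Cons.IH[of k'] piece_child[of i xs] by auto
  qed
qed

lemma piece_level_disj:
  "length xs = length ys \<Longrightarrow> xs \<noteq> ys \<Longrightarrow> piece N xs \<inter> piece N ys = {}"
proof (induction xs arbitrary: ys)
  case Nil then show ?case by simp
next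
  case (Cons i xs)
  then obtain j ys' where ys: "ys = j # ys'" by (cases ys) auto
  show ?case
  proof (cases "xs = ys'")
    case True
    then have "i \<noteq> j" using Cons.prems ys by simp
    then show ?thesis using piece_disj[of xs] True ys unfolding disjoint_family_on_def by simp
  next
    case False
    then have "piece N xs \<inter> piece N ys' = {}" using Cons.IH[of ys'] Cons.prems ys by simp
    then show ?thesis using piece_child[of i xs] piece_child[of j ys'] ys by auto
  qed
qed

end

definition asplit :: "'z measure \<Rightarrow> 'z set \<Rightarrow> (nat \<Rightarrow> real) \<Rightarrow> nat \<Rightarrow> 'z set" where
  "asplit eta A t = (SOME Bs. (\<forall>i. Bs i \<in> sets eta \<and> Bs i \<subseteq> A \<and> measure eta (Bs i) = t i \<and> (t i = 0 \<longrightarrow> Bs i = {}))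
     \<and> disjoint_family Bs \<and> (\<Union>i. Bs i) = A)"

primrec aset :: "'z measure \<Rightarrow> (real^'n) measure \<Rightarrow> nat list \<Rightarrow> 'z set" where
  "aset eta N [] = space eta"
| "aset eta N (i # xs) = asplit eta (aset eta N xs) (\<lambda>j. measure N (piece N (j # xs))) i"

declare aset.simps(2)[simp del]

primrec zpath :: "'z measure \<Rightarrow> (real^'n) measure \<Rightarrow> 'z \<Rightarrow> nat \<Rightarrow> nat list" where
  "zpath eta N z 0 = []"
| "zpath eta N z (Suc k) = (SOME i. z \<in> aset eta N (i # zpath eta N z k)) # zpath eta N z k"

definition Gk :: "'z measure \<Rightarrow> (real^'n) measure \<Rightarrow> nat \<Rightarrow> 'z \<Rightarrow> real^'n" where
  "Gk eta N k z = (SOME x. x \<in> piece N (zpath eta N z k))"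

definition Gf :: "'z measure \<Rightarrow> (real^'n) measure \<Rightarrow> 'z \<Rightarrow> real^'n" where
  "Gf eta N z = (SOME x. \<forall>k. x \<in> piece N (zpath eta N z k))"

locale tree = pieces N for N :: "(real^'n) measure" +
  fixes eta :: "'z measure"
  assumes eta: "prob_space eta" and na: "nonatomic eta" and Nsph: "measure N (sphere 0 1) = 1"
begin

lemma asplit_ok:
  assumes A: "A \<in> sets eta" and A0: "measure eta A = 0 \<Longrightarrow> A = {}"
    and t: "\<And>i. 0 \<le> t i" and ts: "t sums measure eta A"
  shows "(\<forall>i. asplit eta A t i \<in> sets eta \<and> asplit eta A t i \<subseteq> A \<and> measure eta (asplit eta A t i) = t i \<and> (t i = 0 \<longrightarrow> asplit eta A t i = {}))
     \<and> disjoint_family (asplit eta A t) \<and> (\<Union>i. asplit eta A t i) = A"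
proof -
  have ex: "\<exists>Bs. (\<forall>i. Bs i \<in> sets eta \<and> Bs i \<subseteq> A \<and> measure eta (Bs i) = t i \<and> (t i = 0 \<longrightarrow> Bs i = {}))
     \<and> disjoint_family Bs \<and> (\<Union>i. Bs i) = A"
    by (rule prob_space.split_countable[OF eta na A A0 t ts])
  show ?thesis unfolding asplit_def by (rule someI_ex[OF ex])
qed

lemma aset_inv: "aset eta N xs \<in> sets eta \<and> measure eta (aset eta N xs) = measure N (piece N xs)
   \<and> (measure eta (aset eta N xs) = 0 \<longrightarrow> aset eta N xs = {})"
proof (induction xs)
  case Nil
  then show ?case using Nsph prob_space.prob_space[OF eta] by simp
next
  case (Cons i xs)
  have ts: "(\<lambda>j. measure N (piece N (j # xs))) sums measure eta (aset eta N xs)"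
    using piece_sums[of xs] Cons by simp
  note ok = asplit_ok[OF _ _ _ ts]
  have "(\<forall>i. asplit eta (aset eta N xs) (\<lambda>j. measure N (piece N (j # xs))) i \<in> sets eta \<and> asplit eta (aset eta N xs) (\<lambda>j. measure N (piece N (j # xs))) i \<subseteq> aset eta N xs \<and> measure eta (asplit eta (aset eta N xs) (\<lambda>j. measure N (piece N (j # xs))) i) = measure N (piece N (i # xs)) \<and> (measure N (piece N (i # xs)) = 0 \<longrightarrow> asplit eta (aset eta N xs) (\<lambda>j. measure N (piece N (j # xs))) i = {}))"
    using ok Cons by auto
  then show ?case unfolding aset.simps(2) by auto
qed

lemma aset_sets: "aset eta N xs \<in> sets eta" using aset_inv by blast
lemma aset_measure: "measure eta (aset eta N xs) = measure N (piece N xs)" using aset_inv by blast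
lemma aset_zero: "measure eta (aset eta N xs) = 0 \<Longrightarrow> aset eta N xs = {}" using aset_inv by blast

lemma aset_children:
  "(\<forall>i. aset eta N (i # xs) \<subseteq> aset eta N xs) \<and> disjoint_family (\<lambda>i. aset eta N (i # xs))
   \<and> (\<Union>i. aset eta N (i # xs)) = aset eta N xs"
proof -
  have ts: "(\<lambda>j. measure N (piece N (j # xs))) sums measure eta (aset eta N xs)"
    using piece_sums[of xs] aset_measure by simp
  have "(\<forall>i. asplit eta (aset eta N xs) (\<lambda>j. measure N (piece N (j # xs))) i \<subseteq> aset eta N xs)
     \<and> disjoint_family (asplit eta (aset eta N xs) (\<lambda>j. measure N (piece N (j # xs))))
     \<and> (\<Union>i. asplit eta (aset eta N xs) (\<lambda>j. measure N (piece N (j # xs))) i) = aset eta N xs"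
    using asplit_ok[OF aset_sets aset_zero _ ts] by auto
  then show ?thesis unfolding aset.simps(2) by simp
qed

lemma aset_space: "aset eta N xs \<subseteq> space eta"
  using aset_sets sets.sets_into_space by blast

lemma aset_nonempty_piece: "z \<in> aset eta N xs \<Longrightarrow> piece N xs \<noteq> {}"
  using aset_zero[of xs] aset_measure[of xs] by force

lemma zpath_in: "z \<in> space eta \<Longrightarrow> z \<in> aset eta N (zpath eta N z k) \<and> length (zpath eta N z k) = k"
proof (induction k)
  case 0 then show ?case by simp
next
  case (Suc k)
  then have "z \<in> aset eta N (zpath eta N z k)" by simp
  then have "\<exists>i. z \<in> aset eta N (i # zpath eta N z k)"
    using aset_children[of "zpath eta N z k"] by blast
  then have "z \<in> aset eta N ((SOME i. z \<in> aset eta N (i # zpath eta N z k)) # zpath eta N z k)"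
    by (rule someI_ex)
  then show ?case using Suc by simp
qed

lemma zpath_unique: "z \<in> aset eta N xs \<Longrightarrow> xs = zpath eta N z (length xs)"
proof (induction xs)
  case Nil then show ?case by simp
next
  case (Cons i xs)
  have zs: "z \<in> space eta" using Cons.prems aset_space by blast
  have "z \<in> aset eta N xs" using Cons.prems aset_children[of xs] by blast
  then have xs: "xs = zpath eta N z (length xs)" by (rule Cons.IH)
  let ?j = "SOME i. z \<in> aset eta N (i # zpath eta N z (length xs))"
  have "z \<in> aset eta N (zpath eta N z (Suc (length xs)))" using zpath_in[OF zs] by blast
  then have zj: "z \<in> aset eta N (?j # xs)" using xs by simp
  have "i = ?j"
  proof (rule ccontr)
    assume "i \<noteq> ?j"
    then have "aset eta N (i # xs) \<inter> aset eta N (?j # xs) = {}"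
      using aset_children[of xs] unfolding disjoint_family_on_def by blast
    then show False using zj Cons.prems by blast
  qed
  then show ?case using xs by simp
qed

lemma zpath_piece_ne: "z \<in> space eta \<Longrightarrow> piece N (zpath eta N z k) \<noteq> {}"
  using zpath_in aset_nonempty_piece by blast

lemma zpath_mono: "z \<in> space eta \<Longrightarrow> k \<le> m \<Longrightarrow> piece N (zpath eta N z m) \<subseteq> piece N (zpath eta N z k)"
proof (induction m)
  case 0 then show ?case by simp
next
  case (Suc m)
  show ?case
  proof (cases "k = Suc m")
    case True then show ?thesis by simp
  next
    case False
    then have "piece N (zpath eta N z m) \<subseteq> piece N (zpath eta N z k)" using Suc by simp
    moreover have "piece N (zpath eta N z (Suc m)) \<subseteq> piece N (zpath eta N z m)"
      by (simp add: piece_child)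
    ultimately show ?thesis by blast
  qed
qed

lemma Gf_in: "z \<in> space eta \<Longrightarrow> Gf eta N z \<in> piece N (zpath eta N z k)"
proof -
  assume z: "z \<in> space eta"
  have "\<Inter>(range (\<lambda>k. piece N (zpath eta N z k))) \<noteq> {}"
    using piece_compact zpath_piece_ne[OF z] zpath_mono[OF z] by (intro compact_nest) auto
  then have "\<exists>x. \<forall>k. x \<in> piece N (zpath eta N z k)" by blast
  then have "\<forall>k. Gf eta N z \<in> piece N (zpath eta N z k)" unfolding Gf_def by (rule someI_ex)
  then show ?thesis by blast
qed

lemma Gk_in: "z \<in> space eta \<Longrightarrow> Gk eta N k z \<in> piece N (zpath eta N z k)"
proof -
  assume z: "z \<in> space eta"
  from zpath_piece_ne[OF z, of k] obtain x where "x \<in> piece N (zpath eta N z k)" by auto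
  then show ?thesis unfolding Gk_def by (rule someI)
qed

lemma Gf_sphere: "z \<in> space eta \<Longrightarrow> Gf eta N z \<in> sphere 0 1"
  using Gf_in[of z 0] by simp

lemma zpath_meas: "(\<lambda>z. zpath eta N z k) \<in> eta \<rightarrow>\<^sub>M count_space UNIV"
proof (subst measurable_count_space_eq2_countable, intro conjI ballI)
  show "(\<lambda>z. zpath eta N z k) \<in> space eta \<rightarrow> UNIV" by simp
  fix xs :: "nat list"
  have "(\<lambda>z. zpath eta N z k) -` {xs} \<inter> space eta = (if length xs = k then aset eta N xs else {})"
  proof (intro set_eqI iffI)
    fix z assume "z \<in> (\<lambda>z. zpath eta N z k) -` {xs} \<inter> space eta"
    then show "z \<in> (if length xs = k then aset eta N xs else {})" using zpath_in[of z k] by auto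
  next
    fix z assume a: "z \<in> (if length xs = k then aset eta N xs else {})"
    then have "length xs = k" "z \<in> aset eta N xs" by (auto split: if_splits)
    then show "z \<in> (\<lambda>z. zpath eta N z k) -` {xs} \<inter> space eta"
      using zpath_unique[of z xs] aset_space by auto
  qed
  then show "(\<lambda>z. zpath eta N z k) -` {xs} \<inter> space eta \<in> sets eta" using aset_sets by simp
qed

lemma Gk_meas: "Gk eta N k \<in> borel_measurable eta"
proof -
  have "(\<lambda>xs. SOME x. x \<in> piece N xs) \<in> borel_measurable (count_space UNIV)" by simp
  from measurable_comp[OF zpath_meas this] show ?thesis unfolding Gk_def comp_def by simp
qed

lemma Gf_meas: "Gf eta N \<in> eta \<rightarrow>\<^sub>M Sph"
proof -
  have "Gf eta N \<in> borel_measurable eta"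
  proof (rule borel_measurable_LIMSEQ_metric[OF Gk_meas])
    fix z assume z: "z \<in> space eta"
    show "(\<lambda>k. Gk eta N k z) \<longlonglongrightarrow> Gf eta N z"
    proof (rule metric_LIMSEQ_I)
      fix r :: real assume r: "r > 0"
      obtain k0 :: nat where k0: "2 / 2^k0 < r"
      proof -
        obtain n where "(1/2::real)^n < r/2" using real_arch_pow_inv[of "r/2" "1/2"] r by auto
        then have "2 / 2^n < r" by (simp add: power_divide field_simps)
        then show ?thesis by (rule that)
      qed
      show "\<exists>no. \<forall>n\<ge>no. dist (Gk eta N n z) (Gf eta N z) < r"
      proof (intro exI allI impI)
        fix n assume n: "k0 \<le> n"
        have "dist (Gk eta N n z) (Gf eta N z) \<le> 2 / 2^length (zpath eta N z n)"
          using Gk_in[OF z] Gf_in[OF z] by (intro piece_diam)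
        also have "\<dots> = 2 / 2^n" using zpath_in[OF z] by simp
        also have "\<dots> \<le> 2 / 2^k0" using n by (simp add: frac_le)
        finally show "dist (Gk eta N n z) (Gf eta N z) < r" using k0 by simp
      qed
    qed
  qed
  then show ?thesis unfolding Sph_def using Gf_sphere by (intro measurable_restrict_space2) auto
qed

lemma Gf_preimage:
  assumes "length xs = k"
  shows "Gf eta N -` piece N xs \<inter> space eta = aset eta N xs"
proof (intro set_eqI iffI)
  fix z assume z: "z \<in> Gf eta N -` piece N xs \<inter> space eta"
  then have zs: "z \<in> space eta" by simp
  have "Gf eta N z \<in> piece N (zpath eta N z k)" using Gf_in[OF zs] .
  moreover have "Gf eta N z \<in> piece N xs" using z by simp
  moreover have "length (zpath eta N z k) = k" using zpath_in[OF zs] by blast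
  ultimately have "zpath eta N z k = xs"
    using piece_level_disj[of xs "zpath eta N z k"] assms by (metis disjoint_iff)
  then show "z \<in> aset eta N xs" using zpath_in[OF zs] by metis
next
  fix z assume z: "z \<in> aset eta N xs"
  then have zs: "z \<in> space eta" using aset_space by blast
  have "xs = zpath eta N z k" using zpath_unique[OF z] assms by simp
  then show "z \<in> Gf eta N -` piece N xs \<inter> space eta" using Gf_in[OF zs] zs by simp
qed

end

lemma sets_Sph_gen: "sets (Sph :: (real^'n) measure) = sigma_sets (sphere 0 1) ((\<inter>) (sphere 0 1) ` {S. open S})"
proof -
  have "sphere (0::real^'n) 1 \<in> sigma_sets UNIV {S. open S}"
    using sets_borel borel_closed[OF closed_sphere] by metis
  then have "(\<inter>) (sphere (0::real^'n) 1) ` sigma_sets UNIV {S. open S} = sigma_sets (sphere 0 1) ((\<inter>) (sphere 0 1) ` {S. open S})"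
    by (rule sigma_sets_Int) simp
  then show ?thesis unfolding Sph_def sets_restrict_space sets_borel .
qed

context tree
begin

definition lev :: "nat \<Rightarrow> (real^'n) set" where
  "lev k = (\<Union>xs\<in>{xs. length xs = k}. piece N xs)"

lemma lev_borel: "lev k \<in> sets borel"
  unfolding lev_def
proof (rule sets.countable_UN'')
  show "countable {xs :: nat list. length xs = k}" by simp
  fix xs :: "nat list" show "piece N xs \<in> sets borel" by (rule piece_borel)
qed

lemma lev_null: "sphere 0 1 - lev k \<in> null_sets N"
proof (induction k)
  case 0
  have "lev 0 = sphere 0 1" by (simp add: lev_def)
  then show ?case using sb by simp
next
  case (Suc k)
  let ?R = "\<Union>xs\<in>{xs. length xs = k}. piece N xs - (\<Union>i. piece N (i # xs))"
  have Rn: "?R \<in> null_sets N"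
  proof (rule null_sets_UN')
    show "countable {xs :: nat list. length xs = k}" by simp
    fix xs :: "nat list"
    have "piece N xs - (\<Union>i. piece N (i # xs)) \<in> sets N" using piece_sets by auto
    moreover have "emeasure N (piece N xs - (\<Union>i. piece N (i # xs))) = 0"
      using piece_null[of xs] finite_measure.emeasure_eq_measure[OF fin] by simp
    ultimately show "piece N xs - (\<Union>i. piece N (i # xs)) \<in> null_sets N" by (auto intro: null_setsI)
  qed
  have sub: "sphere 0 1 - lev (Suc k) \<subseteq> (sphere 0 1 - lev k) \<union> ?R"
  proof
    fix x assume x: "x \<in> sphere 0 1 - lev (Suc k)"
    show "x \<in> (sphere 0 1 - lev k) \<union> ?R"
    proof (cases "x \<in> lev k")
      case False then show ?thesis using x by blast
    next
      case True
      then obtain xs where xs: "length xs = k" "x \<in> piece N xs" unfolding lev_def by blast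
      have "x \<notin> piece N (i # xs)" for i using x xs unfolding lev_def by auto
      then show ?thesis using xs by blast
    qed
  qed
  have "(sphere 0 1 - lev k) \<union> ?R \<in> null_sets N" using Suc Rn by (rule null_sets.Un)
  moreover have "sphere 0 1 - lev (Suc k) \<in> sets N"
    using sb lev_borel by (auto intro: borel_closed)
  ultimately show ?case using sub by (rule null_sets_subset)
qed

definition Nl :: "(real^'n) set" where "Nl = (\<Union>k. sphere 0 1 - lev k)"

lemma Nl_null: "Nl \<in> null_sets N"
  unfolding Nl_def using lev_null by (rule null_sets_UN)

lemma Nl_borel: "Nl \<in> sets borel"
  unfolding Nl_def using lev_borel by (auto intro: borel_closed)

lemma Gf_not_Nl: "z \<in> space eta \<Longrightarrow> Gf eta N z \<notin> Nl"
proof -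
  assume z: "z \<in> space eta"
  have "Gf eta N z \<in> lev k" for k
    unfolding lev_def using Gf_in[OF z, of k] zpath_in[OF z, of k] by blast
  then show ?thesis unfolding Nl_def by blast
qed

definition Smin :: "(real^'n) set \<Rightarrow> nat list set" where
  "Smin Op = {xs. piece N xs \<subseteq> Op \<and> (\<forall>k. 0 < k \<and> k \<le> length xs \<longrightarrow> \<not> piece N (drop k xs) \<subseteq> Op)}"

lemma Smin_disj: "disjoint_family_on (piece N) (Smin Op)"
proof -
  have *: "piece N xs \<inter> piece N ys = {}"
    if xs: "xs \<in> Smin Op" and ys: "ys \<in> Smin Op" and ne: "xs \<noteq> ys" and len: "length xs \<le> length ys" for xs ys
  proof -
    define d where "d = length ys - length xs"
    have ld: "length (drop d ys) = length xs" using len by (simp add: d_def)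
    show ?thesis
    proof (cases "drop d ys = xs")
      case False
      then have "piece N xs \<inter> piece N (drop d ys) = {}" using piece_level_disj[of xs "drop d ys"] ld by simp
      then show ?thesis using piece_drop[of ys d] by blast
    next
      case True
      show ?thesis
      proof (cases "d = 0")
        case True
        then show ?thesis using \<open>drop d ys = xs\<close> ne by simp
      next
        case False
        then have "\<not> piece N (drop d ys) \<subseteq> Op" using ys by (auto simp: Smin_def d_def)
        moreover have "piece N xs \<subseteq> Op" using xs by (simp add: Smin_def)
        ultimately show ?thesis using True by simp
      qed
    qed
  qed
  show ?thesis unfolding disjoint_family_on_def
  proof (intro ballI impI)
    fix xs ys assume "xs \<in> Smin Op" "ys \<in> Smin Op" "xs \<noteq> ys"
    then show "piece N xs \<inter> piece N ys = {}"
      using *[of xs ys] *[of ys xs] by (cases "length xs \<le> length ys") auto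
  qed
qed

lemma Smin_cover:
  assumes "piece N xs \<subseteq> Op"
  shows "\<exists>ys\<in>Smin Op. piece N xs \<subseteq> piece N ys"
proof -
  let ?P = "\<lambda>m. m \<le> length xs \<and> piece N (drop m xs) \<subseteq> Op"
  have P0: "?P 0" using assms by simp
  have bnd: "\<And>y. ?P y \<Longrightarrow> y \<le> length xs" by simp
  define m where "m = Greatest ?P"
  have Pm: "?P m" unfolding m_def using GreatestI_nat[where P = ?P and k = 0 and b = "length xs"] P0 bnd by blast
  have mx: "\<And>k. ?P k \<Longrightarrow> k \<le> m" unfolding m_def using Greatest_le_nat[where P = ?P and b = "length xs"] bnd by blast
  have "drop m xs \<in> Smin Op"
    unfolding Smin_def
  proof (intro CollectI conjI allI impI)
    show "piece N (drop m xs) \<subseteq> Op" using Pm by simp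
    fix k assume k: "0 < k \<and> k \<le> length (drop m xs)"
    show "\<not> piece N (drop k (drop m xs)) \<subseteq> Op"
    proof
      assume "piece N (drop k (drop m xs)) \<subseteq> Op"
      moreover have "k + m \<le> length xs" using k Pm by auto
      ultimately have "?P (k + m)" by (simp add: add.commute)
      then show False using mx[of "k + m"] k by simp
    qed
  qed
  then show ?thesis using piece_drop[of xs m] by blast
qed

end

lemma Sph_sets: "B \<in> sets borel \<Longrightarrow> B \<subseteq> sphere 0 1 \<Longrightarrow> B \<in> sets (Sph :: (real^'n) measure)"
  unfolding Sph_def by (subst sets_restrict_space_iff) auto

context tree
begin

lemma distr_eq:
  assumes nu: "prob_space nu" "sets nu = sets Sph"
    and NB: "\<And>B. B \<in> sets borel \<Longrightarrow> B \<subseteq> sphere 0 1 \<Longrightarrow> emeasure N B = emeasure nu B"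
  shows "distr eta Sph (Gf eta N) = nu"
proof -
  let ?mu = "distr eta Sph (Gf eta N)"
  note Gm = Gf_meas
  have em_mu: "emeasure ?mu B = emeasure eta (Gf eta N -` B \<inter> space eta)" if "B \<in> sets Sph" for B
    using Gm that by (rule emeasure_distr)
  have piece_Sph: "piece N xs \<in> sets Sph" for xs
    using piece_borel piece_sphere by (rule Sph_sets)
  have piece_eq: "emeasure ?mu (piece N xs) = emeasure nu (piece N xs)" for xs
  proof -
    have "emeasure ?mu (piece N xs) = emeasure eta (aset eta N xs)"
      using em_mu[OF piece_Sph] Gf_preimage[of xs "length xs"] by simp
    also have "\<dots> = ennreal (measure eta (aset eta N xs))"
      using finite_measure.emeasure_eq_measure[OF prob_space.finite_measure[OF eta]] by simp
    also have "\<dots> = ennreal (measure N (piece N xs))" by (simp add: aset_measure)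
    also have "\<dots> = emeasure N (piece N xs)" using finite_measure.emeasure_eq_measure[OF fin] by simp
    also have "\<dots> = emeasure nu (piece N xs)" using NB piece_borel piece_sphere by simp
    finally show ?thesis .
  qed
  have Nl_sph: "Nl \<subseteq> sphere 0 1" unfolding Nl_def by auto
  have Nl_Sph: "Nl \<in> sets Sph" using Nl_borel Nl_sph by (rule Sph_sets)
  have Nl_mu: "Nl \<in> null_sets ?mu"
  proof -
    have "Gf eta N -` Nl \<inter> space eta = {}" using Gf_not_Nl by auto
    then have "emeasure ?mu Nl = 0" using em_mu[OF Nl_Sph] by simp
    then show ?thesis using Nl_Sph by (auto intro: null_setsI)
  qed
  have Nl_nu: "Nl \<in> null_sets nu"
  proof -
    have "emeasure nu Nl = 0" using NB[OF Nl_borel Nl_sph] Nl_null by auto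
    then show ?thesis using Nl_Sph nu by (auto intro: null_setsI)
  qed
  have open_eq: "emeasure ?mu (sphere 0 1 \<inter> Op) = emeasure nu (sphere 0 1 \<inter> Op)" if Op: "open Op" for Op
  proof -
    define U where "U = (\<Union>xs\<in>Smin Op. piece N xs)"
    have US: "U \<subseteq> sphere 0 1 \<inter> Op" unfolding U_def Smin_def using piece_sphere by auto
    have cover: "sphere 0 1 \<inter> Op - U \<subseteq> Nl"
    proof
      fix x assume x: "x \<in> sphere 0 1 \<inter> Op - U"
      show "x \<in> Nl"
      proof (rule ccontr)
        assume nx: "x \<notin> Nl"
        then have lev: "x \<in> lev k" for k using x unfolding Nl_def by blast
        obtain r where r: "r > 0" "ball x r \<subseteq> Op" using Op x open_contains_ball by blast
        obtain k :: nat where k: "2 / 2^k < r"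
        proof -
          obtain n where "(1/2::real)^n < r/2" using real_arch_pow_inv[of "r/2" "1/2"] r by auto
          then have "2 / 2^n < r" by (simp add: power_divide field_simps)
          then show ?thesis by (rule that)
        qed
        obtain xs where xs: "length xs = k" "x \<in> piece N xs" using lev[of k] unfolding lev_def by blast
        have "piece N xs \<subseteq> ball x r"
        proof
          fix y assume "y \<in> piece N xs"
          then have "dist x y \<le> 2 / 2^k" using piece_diam[OF xs(2)] xs(1) by simp
          then show "y \<in> ball x r" using k by simp
        qed
        then have "piece N xs \<subseteq> Op" using r by blast
        then obtain ys where "ys \<in> Smin Op" "piece N xs \<subseteq> piece N ys" using Smin_cover by blast
        then have "x \<in> U" using xs unfolding U_def by blast
        then show False using x by blast
      qed
    qed
    have Ub: "U \<in> sets borel"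
      unfolding U_def
    proof (rule sets.countable_UN'')
      show "countable (Smin Op)" by simp
      fix xs show "piece N xs \<in> sets borel" by (rule piece_borel)
    qed
    have US2: "U \<in> sets Sph" using Ub US by (intro Sph_sets) auto
    have Osets: "sphere 0 1 \<inter> Op \<in> sets Sph" using Op by (intro Sph_sets) auto
    have split: "sphere 0 1 \<inter> Op = U \<union> (sphere 0 1 \<inter> Op - U)" using US by blast
    have Dsets: "sphere 0 1 \<inter> Op - U \<in> sets Sph" using Osets US2 by auto
    have UN: "emeasure M U = (\<integral>\<^sup>+ xs. emeasure M (piece N xs) \<partial>count_space (Smin Op))"
      if "sets M = sets Sph" for M :: "(real^'n) measure"
    proof -
      have "\<And>xs. xs \<in> Smin Op \<Longrightarrow> piece N xs \<in> sets M" using that piece_Sph by simp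
      moreover have "countable (Smin Op)" by simp
      ultimately show ?thesis unfolding U_def by (rule emeasure_UN_countable[OF _ _ Smin_disj])
    qed
    have Dmu: "sphere 0 1 \<inter> Op - U \<in> sets ?mu" using Dsets by simp
    have Dnu: "sphere 0 1 \<inter> Op - U \<in> sets nu" using Dsets nu by simp
    have D0mu: "sphere 0 1 \<inter> Op - U \<in> null_sets ?mu"
      by (rule null_sets_subset[OF Nl_mu Dmu cover])
    have D0nu: "sphere 0 1 \<inter> Op - U \<in> null_sets nu"
      by (rule null_sets_subset[OF Nl_nu Dnu cover])
    have Umu: "U \<in> sets ?mu" using US2 by simp
    have Unu: "U \<in> sets nu" using US2 nu by simp
    have "emeasure ?mu (sphere 0 1 \<inter> Op) = emeasure ?mu (U \<union> (sphere 0 1 \<inter> Op - U))"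
      by (rule arg_cong[OF split])
    also have "\<dots> = emeasure ?mu U" by (rule emeasure_Un_null_set[OF Umu D0mu])
    also have "\<dots> = (\<integral>\<^sup>+ xs. emeasure ?mu (piece N xs) \<partial>count_space (Smin Op))"
      by (rule UN) simp
    also have "\<dots> = (\<integral>\<^sup>+ xs. emeasure nu (piece N xs) \<partial>count_space (Smin Op))"
      by (rule nn_integral_cong) (rule piece_eq)
    also have "\<dots> = emeasure nu U"
      by (rule UN[symmetric]) (rule nu(2))
    also have "\<dots> = emeasure nu (U \<union> (sphere 0 1 \<inter> Op - U))"
      by (rule emeasure_Un_null_set[OF Unu D0nu, symmetric])
    also have "\<dots> = emeasure nu (sphere 0 1 \<inter> Op)"
      by (rule arg_cong[OF split[symmetric]])
    finally show ?thesis .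
  qed
  show ?thesis
  proof (rule measure_eqI_generator_eq[where E = "(\<inter>) (sphere 0 1) ` {S. open S}" and \<Omega> = "sphere 0 1" and A = "\<lambda>_. sphere 0 1"])
    show "Int_stable ((\<inter>) (sphere (0::real^'n) 1) ` {S. open S})"
      unfolding Int_stable_def
    proof (intro ballI)
      fix a b assume "a \<in> (\<inter>) (sphere (0::real^'n) 1) ` {S. open S}" "b \<in> (\<inter>) (sphere (0::real^'n) 1) ` {S. open S}"
      then obtain A B where "a = sphere 0 1 \<inter> A" "b = sphere 0 1 \<inter> B" "open A" "open B" by auto
      then show "a \<inter> b \<in> (\<inter>) (sphere 0 1) ` {S. open S}"
        by (intro image_eqI[of _ _ "A \<inter> B"]) auto
    qed
    show "(\<inter>) (sphere (0::real^'n) 1) ` {S. open S} \<subseteq> Pow (sphere 0 1)" by auto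
    show "\<And>X. X \<in> (\<inter>) (sphere 0 1) ` {S. open S} \<Longrightarrow> emeasure ?mu X = emeasure nu X"
      using open_eq by auto
    show "sets ?mu = sigma_sets (sphere 0 1) ((\<inter>) (sphere 0 1) ` {S. open S})"
      by (simp add: sets_Sph_gen)
    show "sets nu = sigma_sets (sphere 0 1) ((\<inter>) (sphere 0 1) ` {S. open S})"
      using nu by (simp add: sets_Sph_gen)
    show "range (\<lambda>_. sphere (0::real^'n) 1) \<subseteq> (\<inter>) (sphere 0 1) ` {S. open S}"
      by (auto intro!: image_eqI[of _ _ UNIV])
    show "(\<Union>i::nat. sphere (0::real^'n) 1) = sphere 0 1" by simp
    have P: "prob_space ?mu" using prob_space.prob_space_distr[OF eta Gm] .
    have "emeasure ?mu (space ?mu) = 1" using P by (rule prob_space.emeasure_space_1)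
    moreover have "space ?mu = sphere 0 1" by (simp add: space_Sph)
    ultimately show "\<And>i::nat. emeasure ?mu (sphere 0 1) \<noteq> \<infinity>" by simp
  qed
qed

end

lemma part3_exists:
  fixes eta :: "'z measure" and nu :: "(real^'n) measure"
  assumes eta: "prob_space eta" and na: "nonatomic eta" and nu: "prob_space nu" "sets nu = sets (Sph :: (real^'n) measure)"
  shows "\<exists>G \<in> eta \<rightarrow>\<^sub>M Sph. distr eta Sph G = nu"
proof -
  have "space nu = space (Sph :: (real^'n) measure)" by (rule sets_eq_imp_space_eq[OF nu(2)])
  then have sp: "space nu = sphere 0 1" by (simp only: space_Sph)
  have "(\<lambda>x. x) \<in> (Sph :: (real^'n) measure) \<rightarrow>\<^sub>M (borel :: (real^'n) measure)"
    unfolding Sph_def by (rule measurable_restrict_space1) (rule measurable_ident_sets[OF refl])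
  then have idm: "(\<lambda>x. x) \<in> nu \<rightarrow>\<^sub>M (borel :: (real^'n) measure)"
    by (subst measurable_cong_sets[OF nu(2) refl])
  define N where "N = distr nu (borel :: (real^'n) measure) (\<lambda>x. x)"
  have Nprob: "prob_space N" unfolding N_def using prob_space.prob_space_distr[OF nu(1) idm] .
  have Nfin: "finite_measure N" using Nprob by (simp add: prob_space_def)
  have Nsb: "sets N = sets borel" by (simp add: N_def)
  have NB: "emeasure N B = emeasure nu B" if "B \<in> sets borel" "B \<subseteq> sphere 0 1" for B
  proof -
    have "emeasure N B = emeasure nu ((\<lambda>x. x) -` B \<inter> space nu)"
      unfolding N_def using idm that(1) by (rule emeasure_distr)
    also have "(\<lambda>x. x) -` B \<inter> space nu = B" using that(2) sp by auto
    finally show ?thesis .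
  qed
  have N1: "measure N (sphere 0 1) = 1"
  proof -
    have "emeasure N (sphere 0 1) = emeasure nu (space nu)" using NB[of "sphere 0 1"] sp by simp
    also have "\<dots> = 1" using prob_space.emeasure_space_1[OF nu(1)] .
    finally show ?thesis by (simp add: measure_def)
  qed
  interpret tree N eta
    by (rule tree.intro[OF pieces.intro[OF Nfin Nsb] tree_axioms.intro[OF eta na N1]])
  have "distr eta Sph (Gf eta N) = nu" by (rule distr_eq[OF nu NB])
  then show ?thesis using Gf_meas by blast
qed

theorem theorem4p1:
  fixes eta :: "'z measure" and \<beta> :: real and u :: "real^'n"
  assumes eta: "prob_space eta" and beta: "\<beta> > 0" and u: "u \<in> sphere 0 1"
  shows
   "(\<forall>\<Psi>. measurable_O eta \<Psi> \<longrightarrow>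
       Gamma eta (\<lambda>z. \<Psi> z *v u) \<in> Peta eta \<and>
       (\<forall>\<mu>\<in>Peta eta. prompt_energy (hPsi \<beta> \<Psi>) \<mu>
           \<le> prompt_energy (hPsi \<beta> \<Psi>) (Gamma eta (\<lambda>z. \<Psi> z *v u))) \<and>
       prompt_energy (hPsi \<beta> \<Psi>) (Gamma eta (\<lambda>z. \<Psi> z *v u)) = exp \<beta> / (2 * \<beta>) \<and>
       distr (Gamma eta (\<lambda>z. \<Psi> z *v u)) Sph fst = distr eta Sph (\<lambda>z. \<Psi> z *v u))
  \<and> (\<forall>G \<in> eta \<rightarrow>\<^sub>M Sph. \<exists>\<Psi>G. measurable_O eta \<Psi>G \<and> (\<forall>z\<in>space eta. \<Psi>G z *v u = G z) \<and>
       Gamma eta G \<in> Peta eta \<and>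
       (\<forall>\<mu>\<in>Peta eta. prompt_energy (hPsi \<beta> \<Psi>G) \<mu> \<le> prompt_energy (hPsi \<beta> \<Psi>G) (Gamma eta G)) \<and>
       distr (Gamma eta G) Sph fst = distr eta Sph G)
  \<and> (standard_borel eta \<and> nonatomic eta \<longrightarrow>
       (\<forall>\<nu>. prob_space \<nu> \<and> sets \<nu> = sets (Sph :: (real^'n) measure) \<longrightarrow>
         (\<exists>G \<in> eta \<rightarrow>\<^sub>M Sph. \<exists>\<Psi>G. measurable_O eta \<Psi>G \<and> (\<forall>z\<in>space eta. \<Psi>G z *v u = G z) \<and>
            Gamma eta G \<in> Peta eta \<and>
            (\<forall>\<mu>\<in>Peta eta. prompt_energy (hPsi \<beta> \<Psi>G) \<mu> \<le> prompt_energy (hPsi \<beta> \<Psi>G) (Gamma eta G)) \<and>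
            distr (Gamma eta G) Sph fst = distr eta Sph G \<and>
            distr eta Sph G = \<nu>)))"
  proof -
  have i: "\<forall>\<Psi>. measurable_O eta \<Psi> \<longrightarrow>
       Gamma eta (\<lambda>z. \<Psi> z *v u) \<in> Peta eta \<and>
       (\<forall>\<mu>\<in>Peta eta. prompt_energy (hPsi \<beta> \<Psi>) \<mu>
           \<le> prompt_energy (hPsi \<beta> \<Psi>) (Gamma eta (\<lambda>z. \<Psi> z *v u))) \<and>
       prompt_energy (hPsi \<beta> \<Psi>) (Gamma eta (\<lambda>z. \<Psi> z *v u)) = exp \<beta> / (2 * \<beta>) \<and>
       distr (Gamma eta (\<lambda>z. \<Psi> z *v u)) Sph fst = distr eta Sph (\<lambda>z. \<Psi> z *v u)"
  proof (intro allI impI)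
    fix \<Psi> :: "'z \<Rightarrow> real^'n^'n" assume O: "measurable_O eta \<Psi>"
    note GS = energy_star(2)[OF eta O u]
    note E = energy_star(1)[OF eta O u, of \<beta>]
    show "Gamma eta (\<lambda>z. \<Psi> z *v u) \<in> Peta eta \<and>
       (\<forall>\<mu>\<in>Peta eta. prompt_energy (hPsi \<beta> \<Psi>) \<mu>
           \<le> prompt_energy (hPsi \<beta> \<Psi>) (Gamma eta (\<lambda>z. \<Psi> z *v u))) \<and>
       prompt_energy (hPsi \<beta> \<Psi>) (Gamma eta (\<lambda>z. \<Psi> z *v u)) = exp \<beta> / (2 * \<beta>) \<and>
       distr (Gamma eta (\<lambda>z. \<Psi> z *v u)) Sph fst = distr eta Sph (\<lambda>z. \<Psi> z *v u)"
      using Gamma_props[OF eta GS] E energy_le[OF _ O beta] by auto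
  qed
  have ii: "\<forall>G \<in> eta \<rightarrow>\<^sub>M Sph. \<exists>\<Psi>G. measurable_O eta \<Psi>G \<and> (\<forall>z\<in>space eta. \<Psi>G z *v u = G z) \<and>
       Gamma eta G \<in> Peta eta \<and>
       (\<forall>\<mu>\<in>Peta eta. prompt_energy (hPsi \<beta> \<Psi>G) \<mu> \<le> prompt_energy (hPsi \<beta> \<Psi>G) (Gamma eta G)) \<and>
       distr (Gamma eta G) Sph fst = distr eta Sph G"
    using part2[OF eta u _ beta] by blast
  have iii: "standard_borel eta \<and> nonatomic eta \<longrightarrow>
       (\<forall>\<nu>. prob_space \<nu> \<and> sets \<nu> = sets (Sph :: (real^'n) measure) \<longrightarrow>
         (\<exists>G \<in> eta \<rightarrow>\<^sub>M Sph. \<exists>\<Psi>G. measurable_O eta \<Psi>G \<and> (\<forall>z\<in>space eta. \<Psi>G z *v u = G z) \<and>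
            Gamma eta G \<in> Peta eta \<and>
            (\<forall>\<mu>\<in>Peta eta. prompt_energy (hPsi \<beta> \<Psi>G) \<mu> \<le> prompt_energy (hPsi \<beta> \<Psi>G) (Gamma eta G)) \<and>
            distr (Gamma eta G) Sph fst = distr eta Sph G \<and>
            distr eta Sph G = \<nu>))"
  proof (intro impI allI)
    fix \<nu> :: "(real^'n) measure"
    assume sn: "standard_borel eta \<and> nonatomic eta" and nu: "prob_space \<nu> \<and> sets \<nu> = sets (Sph :: (real^'n) measure)"
    obtain G where G: "G \<in> eta \<rightarrow>\<^sub>M Sph" and Gd: "distr eta Sph G = \<nu>"
      using part3_exists[OF eta _ _ _, of \<nu>] sn nu by blast
    show "\<exists>G \<in> eta \<rightarrow>\<^sub>M Sph. \<exists>\<Psi>G. measurable_O eta \<Psi>G \<and> (\<forall>z\<in>space eta. \<Psi>G z *v u = G z) \<and>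
            Gamma eta G \<in> Peta eta \<and>
            (\<forall>\<mu>\<in>Peta eta. prompt_energy (hPsi \<beta> \<Psi>G) \<mu> \<le> prompt_energy (hPsi \<beta> \<Psi>G) (Gamma eta G)) \<and>
            distr (Gamma eta G) Sph fst = distr eta Sph G \<and>
            distr eta Sph G = \<nu>"
      using part2[OF eta u G beta] Gd G by blast
  qed
  show ?thesis by (rule conjI[OF i conjI[OF ii iii]])
qed

end
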